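(* Let $k\geq1$ and let $X\subseteq\omega$ be $2$-random. Then for every computable sequence $\langle f_i:i\in\omega\rangle$ of $k$-bounded colorings $f_i:[\omega]^2\to\omega$ there is an $X$-computable sequence $\langle S_i:i\in\omega\rangle$ such that each $S_i$ is an infinite rainbow for $f_i$.
   Context: A coloring $f:[\omega]^n\to\omega$ is $k$-bounded if each color is assigned to at most $k$ many $\vec x\in[\omega]^n$. A set $S$ is a rainbow for $f$ if $f$ is injective on $[S]^n$. A set is $2$-random if it is Martin-Löf random relative to $\emptyset'$. *)

theory Defs
  imports "HOL-Probability.Probability" "HOL-Library.Nat_Bijection"
begin

datatype rf = Zero | Succ | Proj nat | Comp rf "rf list" | Prim rf rf | Mn rf | Orc

inductive evalr :: "(nat \<Rightarrow> bool) \<Rightarrow> rf \<Rightarrow> nat list \<Rightarrow> nat \<Rightarrow> bool" for A where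
  ev_Zero: "evalr A Zero xs 0"
| ev_Succ: "evalr A Succ (x # xs) (Suc x)"
| ev_Proj: "evalr A (Proj i) xs (if i < length xs then xs ! i else 0)"
| ev_Comp: "list_all2 (\<lambda>g y. evalr A g xs y) gs ys \<Longrightarrow> evalr A f ys v \<Longrightarrow> evalr A (Comp f gs) xs v"
| ev_Prim0: "evalr A f xs v \<Longrightarrow> evalr A (Prim f g) (0 # xs) v"
| ev_PrimS: "evalr A (Prim f g) (y # xs) r \<Longrightarrow> evalr A g (r # y # xs) v \<Longrightarrow> evalr A (Prim f g) (Suc y # xs) v"
| ev_Mn: "evalr A f (y # xs) 0 \<Longrightarrow> (\<forall>z<y. \<exists>w. evalr A f (z # xs) w \<and> w \<noteq> 0) \<Longrightarrow> evalr A (Mn f) xs y"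
| ev_Orc: "evalr A Orc (x # xs) (if A x then 1 else 0)"

primrec enc :: "rf \<Rightarrow> nat" where
  "enc Zero = prod_encode (0, 0)"
| "enc Succ = prod_encode (1, 0)"
| "enc (Proj i) = prod_encode (2, i)"
| "enc (Comp f gs) = prod_encode (3, prod_encode (enc f, list_encode (map enc gs)))"
| "enc (Prim f g) = prod_encode (4, prod_encode (enc f, enc g))"
| "enc (Mn f) = prod_encode (5, enc f)"
| "enc Orc = prod_encode (6, 0)"

definition empty_oracle :: "nat \<Rightarrow> bool" where
  "empty_oracle = (\<lambda>_. False)"

definition halting :: "nat \<Rightarrow> bool" where
  "halting n \<longleftrightarrow> (\<exists>p v. enc p = n \<and> evalr empty_oracle p [n] v)"

definition str_code :: "bool list \<Rightarrow> nat" where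
  "str_code \<sigma> = list_encode (map (\<lambda>b. if b then 1 else 0) \<sigma>)"

definition cantor :: "(nat \<Rightarrow> bool) measure" where
  "cantor = PiM UNIV (\<lambda>_. measure_pmf (bernoulli_pmf (1/2)))"

definition cyl :: "bool list \<Rightarrow> (nat \<Rightarrow> bool) set" where
  "cyl \<sigma> = {Y. \<forall>i<length \<sigma>. Y i = \<sigma> ! i}"

text \<open>W is A-c.e. (a set of pairs (n, sigma)); U_n = [W_n] its n-th open class.\<close>
definition ce_rel_strings :: "(nat \<Rightarrow> bool) \<Rightarrow> (nat \<Rightarrow> bool list \<Rightarrow> bool) \<Rightarrow> bool" where
  "ce_rel_strings A W \<longleftrightarrow> (\<exists>p. \<forall>n \<sigma>. W n \<sigma> \<longleftrightarrow> (\<exists>v. evalr A p [n, str_code \<sigma>] v))"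

definition open_class :: "(bool list \<Rightarrow> bool) \<Rightarrow> (nat \<Rightarrow> bool) set" where
  "open_class V = (\<Union>\<sigma>\<in>{\<sigma>. V \<sigma>}. cyl \<sigma>)"

definition mltest :: "(nat \<Rightarrow> bool) \<Rightarrow> (nat \<Rightarrow> bool list \<Rightarrow> bool) \<Rightarrow> bool" where
  "mltest A W \<longleftrightarrow> ce_rel_strings A W \<and>
     (\<forall>n. emeasure cantor (open_class (W n)) \<le> ennreal ((1/2) ^ n))"

definition mlrandom_rel :: "(nat \<Rightarrow> bool) \<Rightarrow> nat set \<Rightarrow> bool" where
  "mlrandom_rel A X \<longleftrightarrow> (\<forall>W. mltest A W \<longrightarrow> \<not> (\<forall>n. (\<lambda>i. i \<in> X) \<in> open_class (W n)))"

definition two_random :: "nat set \<Rightarrow> bool" where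
  "two_random X \<longleftrightarrow> mlrandom_rel halting X"

text \<open>A sequence of colorings of [omega]^2: f i x y is the color of {x,y} for x < y.\<close>
definition computable_coloring_seq :: "(nat \<Rightarrow> nat \<Rightarrow> nat \<Rightarrow> nat) \<Rightarrow> bool" where
  "computable_coloring_seq f \<longleftrightarrow>
     (\<exists>p. \<forall>i x y. x < y \<longrightarrow> evalr empty_oracle p [i, x, y] (f i x y))"

definition k_bounded :: "nat \<Rightarrow> (nat \<Rightarrow> nat \<Rightarrow> nat) \<Rightarrow> bool" where
  "k_bounded k g \<longleftrightarrow> (\<forall>c. finite {(x, y). x < y \<and> g x y = c} \<and> card {(x, y). x < y \<and> g x y = c} \<le> k)"

definition rainbow :: "(nat \<Rightarrow> nat \<Rightarrow> nat) \<Rightarrow> nat set \<Rightarrow> bool" where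
  "rainbow g S \<longleftrightarrow> (\<forall>x y u v. x \<in> S \<longrightarrow> y \<in> S \<longrightarrow> u \<in> S \<longrightarrow> v \<in> S \<longrightarrow> x < y \<longrightarrow> u < v \<longrightarrow>
      g x y = g u v \<longrightarrow> x = u \<and> y = v)"

definition computable_set_seq_in :: "nat set \<Rightarrow> (nat \<Rightarrow> nat set) \<Rightarrow> bool" where
  "computable_set_seq_in X S \<longleftrightarrow>
     (\<exists>p. \<forall>i n. evalr (\<lambda>m. m \<in> X) p [i, n] (if n \<in> S i then 1 else 0))"

end

theory Submission
  imports Defs
begin


lemma list_all2_det:
  assumes "list_all2 (\<lambda>g y. P g y \<and> (\<forall>w. P g w \<longrightarrow> y = w)) gs ys"
    and "list_all2 P gs zs"
  shows "ys = zs"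
  using assms
proof (induction gs arbitrary: ys zs)
  case Nil then show ?case by simp
next
  case (Cons g gs)
  then show ?case by (cases ys; cases zs; auto)
qed

inductive_cases ZeroE: "evalr A Zero xs v"
inductive_cases SuccE: "evalr A Succ xs v"
inductive_cases ProjE: "evalr A (Proj i) xs v"
inductive_cases CompE: "evalr A (Comp f gs) xs v"
inductive_cases Prim0E: "evalr A (Prim f g) (0 # xs) v"
inductive_cases PrimSE: "evalr A (Prim f g) (Suc y # xs) v"
inductive_cases MnE: "evalr A (Mn f) xs v"
inductive_cases OrcE: "evalr A Orc xs v"

lemma evalr_det:
  assumes "evalr A p xs v" shows "evalr A p xs w \<Longrightarrow> v = w"
  using assms
proof (induction arbitrary: w rule: evalr.induct)
  case (ev_Zero xs) from ev_Zero.prems show ?case by (rule ZeroE) simp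
next
  case (ev_Succ x xs) from ev_Succ.prems show ?case by (rule SuccE) simp
next
  case (ev_Proj i xs) from ev_Proj.prems show ?case by (rule ProjE) simp
next
  case (ev_Comp xs gs ys f v)
  from ev_Comp.prems obtain zs where z: "list_all2 (\<lambda>g. evalr A g xs) gs zs" "evalr A f zs w"
    by (auto elim: CompE)
  have "ys = zs"
    using list_all2_det[of "\<lambda>g y. evalr A g xs y" gs ys zs] ev_Comp.IH(1) z(1)
    by (simp add: list_all2_conv_all_nth)
  then show ?case using ev_Comp.IH(2) z(2) by simp
next
  case (ev_Prim0 f xs v g) from ev_Prim0.prems show ?case by (rule Prim0E) (use ev_Prim0.IH in simp)
next
  case (ev_PrimS f g y xs r v)
  from ev_PrimS.prems obtain r' where "evalr A (Prim f g) (y # xs) r'" "evalr A g (r' # y # xs) w"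
    by (rule PrimSE) blast
  then show ?case using ev_PrimS.IH by auto
next
  case (ev_Mn f y xs)
  from ev_Mn.prems have w0: "evalr A f (w # xs) 0" and wl: "\<forall>z<w. \<exists>u. evalr A f (z # xs) u \<and> u \<noteq> 0"
    by (rule MnE, blast)+
  show ?case
  proof (rule ccontr)
    assume "y \<noteq> w"
    then consider "y < w" | "w < y" by linarith
    then show False
    proof cases
      case 1
      then obtain u where "evalr A f (y # xs) u" "u \<noteq> 0" using wl by blast
      then show False using ev_Mn by auto
    next
      case 2
      then obtain u where "evalr A f (w # xs) u" "u \<noteq> 0" "\<forall>w'. evalr A f (w # xs) w' \<longrightarrow> u = w'"
        using ev_Mn by blast
      then show False using w0 by auto
    qed
  qed
next
  case (ev_Orc x xs) from ev_Orc.prems show ?case by (rule OrcE) simp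
qed

section \<open>Computable functions\<close>

definition rc :: "(nat \<Rightarrow> bool) \<Rightarrow> nat \<Rightarrow> (nat list \<Rightarrow> nat) \<Rightarrow> bool" where
  "rc A n f \<longleftrightarrow> (\<exists>p. \<forall>xs. length xs = n \<longrightarrow> evalr A p xs (f xs))"

lemma rc_cong: "(\<And>xs. length xs = n \<Longrightarrow> f xs = g xs) \<Longrightarrow> rc A n f \<Longrightarrow> rc A n g"
  unfolding rc_def by metis

lemma rc_const0: "rc A n (\<lambda>_. 0)"
  unfolding rc_def by (auto intro: evalr.intros)

lemma rc_proj: "i < n \<Longrightarrow> rc A n (\<lambda>xs. xs ! i)"
  unfolding rc_def
  by (rule exI[of _ "Proj i"]) (metis evalr.ev_Proj)

lemma rc_list:
  assumes "\<forall>f\<in>set fs. rc A n f"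
  shows "\<exists>ps. \<forall>xs. length xs = n \<longrightarrow> list_all2 (\<lambda>g y. evalr A g xs y) ps (map (\<lambda>f. f xs) fs)"
  using assms
proof (induction fs)
  case Nil then show ?case by auto
next
  case (Cons f fs)
  then obtain ps where ps: "\<forall>xs. length xs = n \<longrightarrow> list_all2 (\<lambda>g y. evalr A g xs y) ps (map (\<lambda>f. f xs) fs)"
    by auto
  from Cons.prems obtain p where "\<forall>xs. length xs = n \<longrightarrow> evalr A p xs (f xs)" unfolding rc_def by auto
  then show ?case using ps by (intro exI[of _ "p # ps"]) auto
qed

lemma rc_comp:
  assumes "rc A (length fs) g" "\<forall>f\<in>set fs. rc A n f"
  shows "rc A n (\<lambda>xs. g (map (\<lambda>f. f xs) fs))"
proof -
  obtain ps where ps: "\<forall>xs. length xs = n \<longrightarrow> list_all2 (\<lambda>g y. evalr A g xs y) ps (map (\<lambda>f. f xs) fs)"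
    using rc_list[OF assms(2)] by blast
  obtain q where q: "\<forall>ys. length ys = length fs \<longrightarrow> evalr A q ys (g ys)" using assms(1) unfolding rc_def by auto
  show ?thesis unfolding rc_def
    by (rule exI[of _ "Comp q ps"]) (auto intro!: evalr.ev_Comp ps[rule_format] q[rule_format])
qed

lemma rc_succ: "rc A n f \<Longrightarrow> rc A n (\<lambda>xs. Suc (f xs))"
proof -
  assume "rc A n f"
  moreover have "rc A 1 (\<lambda>xs. Suc (hd xs))"
    unfolding rc_def by (rule exI[of _ Succ]) (auto simp: length_Suc_conv intro: evalr.intros)
  ultimately show ?thesis using rc_comp[of A "[f]" "\<lambda>xs. Suc (hd xs)" n] by simp
qed

lemma rc_const: "rc A n (\<lambda>_. c)"
  by (induction c) (auto intro: rc_const0 rc_succ)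

lemma rc_orc: "rc A n f \<Longrightarrow> rc A n (\<lambda>xs. if A (f xs) then 1 else 0)"
proof -
  assume "rc A n f"
  moreover have "rc A 1 (\<lambda>xs. if A (hd xs) then 1 else 0)"
    unfolding rc_def
  proof (rule exI[of _ Orc], intro allI impI)
    fix xs :: "nat list" assume "length xs = 1"
    then obtain y where "xs = [y]" by (auto simp: length_Suc_conv)
    then show "evalr A Orc xs (if A (hd xs) then 1 else 0)" using evalr.ev_Orc[of A y "[]"] by simp
  qed
  ultimately show ?thesis using rc_comp[of A "[f]" "\<lambda>xs. if A (hd xs) then 1 else 0" n] by simp
qed

lemma rc_prim_raw:
  assumes "rc A n f" "rc A (Suc (Suc n)) (\<lambda>xs. g (xs!0) (xs!1) (drop 2 xs))"
    and "\<And>ys. H 0 ys = f ys" "\<And>y ys. H (Suc y) ys = g (H y ys) y ys"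
  shows "rc A (Suc n) (\<lambda>xs. H (hd xs) (tl xs))"
proof -
  obtain p where p: "\<forall>xs. length xs = n \<longrightarrow> evalr A p xs (f xs)" using assms(1) unfolding rc_def by auto
  obtain q where q: "\<forall>xs. length xs = Suc (Suc n) \<longrightarrow> evalr A q xs (g (xs!0) (xs!1) (drop 2 xs))"
    using assms(2) unfolding rc_def by auto
  have "evalr A (Prim p q) (y # ys) (H y ys)" if "length ys = n" for y ys
  proof (induction y)
    case 0 then show ?case using p that assms(3) by (auto intro: evalr.intros)
  next
    case (Suc y)
    have "evalr A q (H y ys # y # ys) (g (H y ys) y ys)" using q[rule_format, of "H y ys # y # ys"] that by simp
    then show ?case using Suc assms(4) by (auto intro: evalr.ev_PrimS)
  qed
  then show ?thesis unfolding rc_def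
    by (intro exI[of _ "Prim p q"]) (auto simp: length_Suc_conv)
qed


lemma map_nth_upt: "length xs = n \<Longrightarrow> map (\<lambda>i. xs ! i) [0..<n] = xs"
  using map_nth[of xs] by (simp add: comp_def)

lemma hd_tl1: "1 < length xs \<Longrightarrow> hd (tl xs) = xs ! 1"
  by (cases xs; cases "tl xs") auto
lemma hd_tl2: "2 < length xs \<Longrightarrow> hd (tl (tl xs)) = xs ! 2"
  by (cases xs; cases "tl xs"; cases "tl (tl xs)") (auto simp: numeral_eq_Suc)
lemma hd_tl3: "3 < length xs \<Longrightarrow> hd (tl (tl (tl xs))) = xs ! 3"
  by (cases xs; cases "tl xs"; cases "tl (tl xs)"; cases "tl (tl (tl xs))") (auto simp: numeral_eq_Suc)
lemma hd_tl4: "4 < length xs \<Longrightarrow> hd (tl (tl (tl (tl xs)))) = xs ! 4"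
  by (cases xs; cases "tl xs"; cases "tl (tl xs)"; cases "tl (tl (tl xs))"; cases "tl (tl (tl (tl xs)))") (auto simp: numeral_eq_Suc)

lemma rc_bind:
  assumes "rc A (Suc n) (\<lambda>ys. F (hd ys) (tl ys))" "rc A n e"
  shows "rc A n (\<lambda>xs. F (e xs) xs)"
proof -
  let ?fs = "e # map (\<lambda>i xs. xs ! i) [0..<n]"
  have "\<forall>f\<in>set ?fs. rc A n f" using assms(2) by (auto intro: rc_proj)
  moreover have "length ?fs = Suc n" by simp
  ultimately have "rc A n (\<lambda>xs. (\<lambda>ys. F (hd ys) (tl ys)) (map (\<lambda>f. f xs) ?fs))"
    using rc_comp[of A ?fs "\<lambda>ys. F (hd ys) (tl ys)" n] assms(1) by simp
  then show ?thesis
    by (rule rc_cong[rotated]) (simp add: map_nth_upt[unfolded comp_def] comp_def)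
qed

lemma rc_fix: "rc A n f \<Longrightarrow> n = m \<Longrightarrow> (\<And>xs. length xs = m \<Longrightarrow> f xs = g xs) \<Longrightarrow> rc A m g"
  using rc_cong by blast

lemma rc_comp1: "rc A 1 h \<Longrightarrow> rc A n f \<Longrightarrow> rc A n (\<lambda>xs. h [f xs])"
  using rc_comp[of A "[f]" h n] by simp
lemma rc_comp2: "rc A 2 h \<Longrightarrow> rc A n f \<Longrightarrow> rc A n g \<Longrightarrow> rc A n (\<lambda>xs. h [f xs, g xs])"
  using rc_comp[of A "[f, g]" h n] by (simp add: numeral_2_eq_2)

lemma rc_drop_nth: "m + i < n \<Longrightarrow> rc A n (\<lambda>xs. drop m xs ! i)"
  by (rule rc_cong[OF _ rc_proj[of "m+i"]]) (auto simp: add.commute)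
lemma rc_hd: "0 < n \<Longrightarrow> rc A n (\<lambda>xs. hd xs)"
  by (rule rc_cong[OF _ rc_proj[of 0]]) (auto simp: hd_conv_nth)
lemma rc_tl_nth: "Suc i < n \<Longrightarrow> rc A n (\<lambda>xs. tl xs ! i)"
  by (rule rc_cong[OF _ rc_proj[of "Suc i"]]) (auto simp: nth_tl)
lemma rc_hd_tl: "1 < n \<Longrightarrow> rc A n (\<lambda>xs. hd (tl xs))"
  by (rule rc_cong[OF _ rc_proj[of 1]]) (auto simp: hd_tl1)
lemma rc_tl2_nth: "Suc (Suc i) < n \<Longrightarrow> rc A n (\<lambda>xs. tl (tl xs) ! i)"
  by (rule rc_cong[OF _ rc_proj[of "Suc (Suc i)"]]) (auto simp: nth_tl)
lemma rc_hd_tl2: "2 < n \<Longrightarrow> rc A n (\<lambda>xs. hd (tl (tl xs)))"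
  by (rule rc_cong[OF _ rc_proj[of 2]]) (auto simp: hd_tl2)
lemma rc_tl3_nth: "Suc (Suc (Suc i)) < n \<Longrightarrow> rc A n (\<lambda>xs. tl (tl (tl xs)) ! i)"
  by (rule rc_cong[OF _ rc_proj[of "Suc (Suc (Suc i))"]]) (auto simp: nth_tl)
lemma rc_hd_tl3: "3 < n \<Longrightarrow> rc A n (\<lambda>xs. hd (tl (tl (tl xs))))"
  by (rule rc_cong[OF _ rc_proj[of 3]]) (auto simp: hd_tl3)
lemma rc_tl4_nth: "4 + i < n \<Longrightarrow> rc A n (\<lambda>xs. tl (tl (tl (tl xs))) ! i)"
  by (rule rc_cong[OF _ rc_proj[of "4+i"]]) (auto simp: nth_tl numeral_eq_Suc)
lemma rc_hd_tl4: "4 < n \<Longrightarrow> rc A n (\<lambda>xs. hd (tl (tl (tl (tl xs)))))"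
  by (rule rc_cong[OF _ rc_proj[of 4]]) (auto simp: hd_tl4)

lemma rc_add2: "rc A 2 (\<lambda>xs. xs!0 + xs!1)"
proof -
  have "rc A (Suc 1) (\<lambda>xs. (\<lambda>y ys. y + ys!0) (hd xs) (tl xs))"
    by (rule rc_prim_raw[where f="\<lambda>ys. ys!0" and g="\<lambda>r y ys. Suc r"])
       (auto intro: rc_proj rc_succ)
  then show ?thesis by (rule rc_fix) (auto simp: numeral_2_eq_2 length_Suc_conv)
qed

lemma rc_add: "rc A n f \<Longrightarrow> rc A n g \<Longrightarrow> rc A n (\<lambda>xs. f xs + g xs)"
  using rc_comp2[OF rc_add2] by simp

lemma rc_mult2: "rc A 2 (\<lambda>xs. xs!0 * xs!1)"
proof -
  have "rc A (Suc 1) (\<lambda>xs. (\<lambda>y ys. y * ys!0) (hd xs) (tl xs))"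
    by (rule rc_prim_raw[where f="\<lambda>ys. 0" and g="\<lambda>r y ys. r + ys!0"])
       (auto intro!: rc_const0 rc_add rc_proj rc_drop_nth[of 2 0, simplified])
  then show ?thesis by (rule rc_fix) (auto simp: numeral_2_eq_2 length_Suc_conv)
qed

lemma rc_mult: "rc A n f \<Longrightarrow> rc A n g \<Longrightarrow> rc A n (\<lambda>xs. f xs * g xs)"
  using rc_comp2[OF rc_mult2] by simp

lemma rc_pred1: "rc A 1 (\<lambda>xs. xs!0 - 1)"
proof -
  have "rc A (Suc 0) (\<lambda>xs. (\<lambda>y ys. y - 1) (hd xs) (tl xs))"
    by (rule rc_prim_raw[where f="\<lambda>ys. 0" and g="\<lambda>r y ys. y"])
       (auto intro!: rc_const0 rc_proj)
  then show ?thesis by (rule rc_fix) (auto simp: length_Suc_conv)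
qed

lemma rc_pred: "rc A n f \<Longrightarrow> rc A n (\<lambda>xs. f xs - 1)"
  using rc_comp1[OF rc_pred1] by simp
lemma rc_pred': "rc A n f \<Longrightarrow> rc A n (\<lambda>xs. f xs - Suc 0)"
  using rc_pred by simp

lemma rc_minus2: "rc A 2 (\<lambda>xs. xs!1 - xs!0)"
proof -
  have "rc A (Suc 1) (\<lambda>xs. (\<lambda>y ys. ys!0 - y) (hd xs) (tl xs))"
    by (rule rc_prim_raw[where f="\<lambda>ys. ys!0" and g="\<lambda>r y ys. r - 1"])
       (auto intro!: rc_pred' rc_proj)
  then show ?thesis by (rule rc_fix) (auto simp: numeral_2_eq_2 length_Suc_conv)
qed

lemma rc_minus: assumes "rc A n f" "rc A n g" shows "rc A n (\<lambda>xs. f xs - g xs)"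
  using rc_comp2[OF rc_minus2 assms(2) assms(1)] by simp

lemma rc_pow2: "rc A 2 (\<lambda>xs. xs!1 ^ xs!0)"
proof -
  have "rc A (Suc 1) (\<lambda>xs. (\<lambda>y ys. ys!0 ^ y) (hd xs) (tl xs))"
    by (rule rc_prim_raw[where f="\<lambda>ys. 1" and g="\<lambda>r y ys. r * ys!0"])
       (auto intro!: rc_const rc_mult rc_proj rc_drop_nth[of 2 0, simplified])
  then show ?thesis by (rule rc_fix) (auto simp: numeral_2_eq_2 length_Suc_conv)
qed

lemma rc_pow: assumes "rc A n f" "rc A n g" shows "rc A n (\<lambda>xs. f xs ^ g xs)"
  using rc_comp2[OF rc_pow2 assms(2) assms(1)] by simp

lemma rc_sum0:
  assumes "rc A (Suc n) (\<lambda>ys. F (hd ys) (tl ys))"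
  shows "rc A (Suc n) (\<lambda>ys. (\<Sum>j<hd ys. F j (tl ys)))"
proof -
  have s: "rc A (Suc (Suc n)) (\<lambda>xs. F (xs!1) (drop 2 xs))"
  proof -
    let ?fs = "(\<lambda>xs. xs ! 1) # map (\<lambda>i xs. xs ! (i + 2)) [0..<n]"
    have "rc A (Suc (Suc n)) (\<lambda>xs. (\<lambda>ys. F (hd ys) (tl ys)) (map (\<lambda>f. f xs) ?fs))"
      by (rule rc_comp) (use assms in \<open>auto intro!: rc_proj\<close>)
    note h = this
    have eq: "map (\<lambda>i. xs ! (i + 2)) [0..<n] = drop 2 xs" if "length xs = Suc (Suc n)" for xs :: "nat list"
      using that by (simp add: list_eq_iff_nth_eq)
    show ?thesis by (rule rc_fix[OF h]) (use eq in \<open>auto simp: comp_def\<close>)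
  qed
  show ?thesis
    by (rule rc_prim_raw[where f="\<lambda>ys. 0" and g="\<lambda>r y ys. r + F y ys"])
       (auto intro!: rc_const0 rc_add rc_proj s[simplified])
qed

lemma rc_sum:
  assumes "rc A (Suc n) (\<lambda>ys. F (hd ys) (tl ys))" "rc A n e"
  shows "rc A n (\<lambda>xs. (\<Sum>j<e xs. F j xs))"
  using rc_bind[OF rc_sum0[OF assms(1)] assms(2)] .

definition ind :: "bool \<Rightarrow> nat" where "ind b = (if b then 1 else 0)"

definition rcp :: "(nat \<Rightarrow> bool) \<Rightarrow> nat \<Rightarrow> (nat list \<Rightarrow> bool) \<Rightarrow> bool" where
  "rcp A n P \<longleftrightarrow> rc A n (\<lambda>xs. ind (P xs))"

lemma rcp_eq: "rc A n f \<Longrightarrow> rc A n g \<Longrightarrow> rcp A n (\<lambda>xs. f xs = g xs)"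
  unfolding rcp_def
  by (rule rc_cong[of _ "\<lambda>xs. 1 - ((f xs - g xs) + (g xs - f xs))"])
     (auto simp: ind_def intro!: rc_minus rc_add rc_const)

lemma rcp_less: "rc A n f \<Longrightarrow> rc A n g \<Longrightarrow> rcp A n (\<lambda>xs. f xs < g xs)"
  unfolding rcp_def
  by (rule rc_cong[of _ "\<lambda>xs. 1 - (1 - (g xs - f xs))"])
     (auto simp: ind_def intro!: rc_minus rc_add rc_const)

lemma rcp_le: "rc A n f \<Longrightarrow> rc A n g \<Longrightarrow> rcp A n (\<lambda>xs. f xs \<le> g xs)"
  unfolding rcp_def
  by (rule rc_cong[of _ "\<lambda>xs. 1 - (f xs - g xs)"])
     (auto simp: ind_def intro!: rc_minus rc_add rc_const)

lemma rcp_conj: "rcp A n P \<Longrightarrow> rcp A n Q \<Longrightarrow> rcp A n (\<lambda>xs. P xs \<and> Q xs)"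
  unfolding rcp_def
  by (rule rc_cong[of _ "\<lambda>xs. ind (P xs) * ind (Q xs)"]) (auto simp: ind_def intro!: rc_mult)

lemma rcp_not: "rcp A n P \<Longrightarrow> rcp A n (\<lambda>xs. \<not> P xs)"
  unfolding rcp_def
  by (rule rc_cong[of _ "\<lambda>xs. 1 - ind (P xs)"]) (auto simp: ind_def intro!: rc_minus rc_const)

lemma rcp_disj: "rcp A n P \<Longrightarrow> rcp A n Q \<Longrightarrow> rcp A n (\<lambda>xs. P xs \<or> Q xs)"
  unfolding rcp_def
  by (rule rc_cong[of _ "\<lambda>xs. 1 - (1 - ind (P xs)) * (1 - ind (Q xs))"])
     (auto simp: ind_def intro!: rc_mult rc_minus rc_const)

lemma rcp_imp: "rcp A n P \<Longrightarrow> rcp A n Q \<Longrightarrow> rcp A n (\<lambda>xs. P xs \<longrightarrow> Q xs)"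
  unfolding rcp_def
  by (rule rc_cong[of _ "\<lambda>xs. 1 - ind (P xs) * (1 - ind (Q xs))"])
     (auto simp: ind_def intro!: rc_mult rc_minus rc_const)

lemma rcp_iff: assumes "rcp A n P" "rcp A n Q" shows "rcp A n (\<lambda>xs. P xs \<longleftrightarrow> Q xs)"
proof -
  have "rcp A n (\<lambda>xs. (P xs \<and> Q xs) \<or> (\<not> P xs \<and> \<not> Q xs))"
    by (intro rcp_disj rcp_conj rcp_not assms)
  then show ?thesis unfolding rcp_def by (rule rc_cong[rotated]) (auto simp: ind_def)
qed

lemma rcp_const: "rcp A n (\<lambda>xs. b)"
  unfolding rcp_def by (rule rc_const)

lemma rcp_orc: "rc A n f \<Longrightarrow> rcp A n (\<lambda>xs. A (f xs))"
  unfolding rcp_def ind_def by (rule rc_orc)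

lemma rc_if: "rcp A n P \<Longrightarrow> rc A n f \<Longrightarrow> rc A n g \<Longrightarrow> rc A n (\<lambda>xs. if P xs then f xs else g xs)"
  unfolding rcp_def
  by (rule rc_cong[of _ "\<lambda>xs. ind (P xs) * f xs + (1 - ind (P xs)) * g xs"])
     (auto simp: ind_def intro!: rc_mult rc_minus rc_const rc_add)

lemma rc_ind: "rcp A n P \<Longrightarrow> rc A n (\<lambda>xs. ind (P xs))"
  unfolding rcp_def .

lemma rcp_ball:
  assumes "rcp A (Suc n) (\<lambda>ys. P (hd ys) (tl ys))" "rc A n e"
  shows "rcp A n (\<lambda>xs. \<forall>j<e xs. P j xs)"
proof -
  have "rc A n (\<lambda>xs. (\<Sum>j<e xs. (\<lambda>j xs. 1 - ind (P j xs)) j xs))"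
    by (rule rc_sum) (use assms in \<open>auto intro!: rc_minus rc_const simp: rcp_def\<close>)
  then have "rcp A n (\<lambda>xs. (\<Sum>j<e xs. 1 - ind (P j xs)) = 0)"
    by (rule rcp_eq[OF _ rc_const])
  then show ?thesis unfolding rcp_def
    by (rule rc_cong[rotated]) (auto simp: ind_def)
qed

lemma rcp_bex:
  assumes "rcp A (Suc n) (\<lambda>ys. P (hd ys) (tl ys))" "rc A n e"
  shows "rcp A n (\<lambda>xs. \<exists>j<e xs. P j xs)"
proof -
  have "rcp A n (\<lambda>xs. \<not> (\<forall>j<e xs. \<not> P j xs))"
    by (intro rcp_not rcp_ball[OF rcp_not] assms)
  then show ?thesis unfolding rcp_def by (rule rc_cong[rotated]) auto
qed

definition bmin :: "nat \<Rightarrow> (nat \<Rightarrow> bool) \<Rightarrow> nat" where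
  "bmin e P = (\<Sum>j<e. ind (\<forall>i<Suc j. \<not> P i))"

lemma bmin_eq: "bmin e P = (if \<exists>j<e. P j then (LEAST j. P j) else e)"
proof (induction e)
  case 0 then show ?case by (simp add: bmin_def)
next
  case (Suc e)
  have "bmin (Suc e) P = bmin e P + ind (\<forall>i<Suc e. \<not> P i)" by (simp add: bmin_def)
  also have "\<dots> = (if \<exists>j<Suc e. P j then (LEAST j. P j) else Suc e)"
  proof (cases "\<exists>j<e. P j")
    case True
    then show ?thesis using Suc by (auto simp: ind_def)
  next
    case False
    note F = this
    show ?thesis
    proof (cases "P e")
      case True
      have "(LEAST j. P j) = e"
        by (rule Least_equality) (use True F in \<open>auto simp: not_le[symmetric]\<close>)
      then show ?thesis using Suc F True by (auto simp: ind_def)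
    next
      case False
      then show ?thesis using Suc F by (auto simp: ind_def less_Suc_eq)
    qed
  qed
  finally show ?case .
qed

lemma rc_sel:
  assumes "rc A (Suc n) (\<lambda>ys. F (hd ys) (tl ys))" "j < m" "d + n \<le> m"
  shows "rc A m (\<lambda>xs. F (xs ! j) (take n (drop d xs)))"
proof -
  let ?fs = "(\<lambda>xs. xs ! j) # map (\<lambda>i xs. xs ! (d + i)) [0..<n]"
  have h: "rc A m (\<lambda>xs. (\<lambda>ys. F (hd ys) (tl ys)) (map (\<lambda>f. f xs) ?fs))"
    by (rule rc_comp) (use assms in \<open>auto intro!: rc_proj\<close>)
  have eq: "map (\<lambda>i. xs ! (d + i)) [0..<n] = take n (drop d xs)" if "length xs = m" for xs :: "nat list"
    using that assms by (simp add: list_eq_iff_nth_eq)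
  show ?thesis by (rule rc_fix[OF h]) (use eq in \<open>auto simp: comp_def\<close>)
qed

lemma rc_weak:
  assumes "rc A (Suc n) (\<lambda>ys. F (hd ys) (tl ys))"
  shows "rc A (Suc (Suc n)) (\<lambda>ys. F (hd ys) (tl (tl ys)))"
proof -
  have "rc A (Suc (Suc n)) (\<lambda>xs. F (xs ! 0) (take n (drop 2 xs)))"
    by (rule rc_sel[OF assms]) auto
  then show ?thesis
    by (rule rc_fix) (auto simp: hd_conv_nth drop_Suc[symmetric] length_Suc_conv)
qed

lemma rcp_weak:
  assumes "rcp A (Suc n) (\<lambda>ys. P (hd ys) (tl ys))"
  shows "rcp A (Suc (Suc n)) (\<lambda>ys. P (hd ys) (tl (tl ys)))"
  using rc_weak[of A n "\<lambda>a b. ind (P a b)"] assms unfolding rcp_def by simp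

lemma rc_bmin:
  assumes "rcp A (Suc n) (\<lambda>ys. P (hd ys) (tl ys))" "rc A n e"
  shows "rc A n (\<lambda>xs. bmin (e xs) (\<lambda>j. P j xs))"
proof -
  have "rcp A (Suc (Suc n)) (\<lambda>ys. \<not> P (hd ys) (tl (tl ys)))"
    by (rule rcp_not, rule rcp_weak[OF assms(1)])
  then have "rcp A (Suc n) (\<lambda>ys. \<forall>i<Suc (hd ys). \<not> P i (tl ys))"
    by (intro rcp_ball) (auto intro!: rc_succ rc_hd)
  then show ?thesis unfolding bmin_def rcp_def
    by (intro rc_sum assms) auto
qed

lemmas rc_intros = rc_const rc_proj rc_drop_nth rc_hd rc_tl_nth rc_hd_tl rc_tl2_nth rc_hd_tl2
  rc_tl3_nth rc_hd_tl3 rc_tl4_nth rc_hd_tl4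
  rc_add rc_mult rc_minus rc_pow rc_succ rc_sum rcp_eq rcp_less rcp_le rcp_conj rcp_not
  rcp_disj rcp_imp rcp_iff rcp_const rcp_orc rc_if rc_ind rcp_ball rcp_bex rc_bmin


lemma rc_tl1: assumes "rc A n f" shows "rc A (Suc n) (\<lambda>xs. f (tl xs))"
proof -
  let ?fs = "map (\<lambda>i xs. xs ! (Suc i)) [0..<n]"
  have h: "rc A (Suc n) (\<lambda>xs. f (map (\<lambda>g. g xs) ?fs))"
    by (rule rc_comp) (use assms in \<open>auto intro!: rc_proj\<close>)
  have eq: "map (\<lambda>i. xs ! Suc i) [0..<n] = tl xs" if "length xs = Suc n" for xs :: "nat list"
    using that by (simp add: list_eq_iff_nth_eq nth_tl)
  show ?thesis by (rule rc_fix[OF h]) (use eq in \<open>auto simp: comp_def\<close>)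
qed

lemma rc_tl2: "rc A n f \<Longrightarrow> rc A (Suc (Suc n)) (\<lambda>xs. f (tl (tl xs)))"
  using rc_tl1[OF rc_tl1[of A n f]] by simp
lemma rc_tl3: "rc A n f \<Longrightarrow> rc A (Suc (Suc (Suc n))) (\<lambda>xs. f (tl (tl (tl xs))))"
  using rc_tl1[OF rc_tl2[of A n f]] by simp
lemma rc_tl4: "rc A n f \<Longrightarrow> rc A (Suc (Suc (Suc (Suc n)))) (\<lambda>xs. f (tl (tl (tl (tl xs)))))"
  using rc_tl1[OF rc_tl3[of A n f]] by simp

lemmas rc_intros2 = rc_intros rc_tl1 rc_tl2 rc_tl3 rc_tl4

lemma triangle_sum: "triangle n = (\<Sum>j<Suc n. j)"
  by (induction n) auto

lemma rc_pe: "rc A n f \<Longrightarrow> rc A n g \<Longrightarrow> rc A n (\<lambda>xs. prod_encode (f xs, g xs))"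
  unfolding prod_encode_def triangle_sum
  by (auto intro!: rc_intros)

definition pfst :: "nat \<Rightarrow> nat" where "pfst z = fst (prod_decode z)"
definition psnd :: "nat \<Rightarrow> nat" where "psnd z = snd (prod_decode z)"

lemma pfst_pe[simp]: "pfst (prod_encode (a, b)) = a" by (simp add: pfst_def)
lemma psnd_pe[simp]: "psnd (prod_encode (a, b)) = b" by (simp add: psnd_def)

lemma pfst_bmin: "pfst z = bmin (Suc z) (\<lambda>a. \<exists>b<Suc z. prod_encode (a, b) = z)"
proof -
  obtain a b where ab: "prod_decode z = (a, b)" by (cases "prod_decode z")
  then have z: "z = prod_encode (a, b)" by (metis prod_decode_inverse)
  have "(LEAST a'. \<exists>b'<Suc z. prod_encode (a', b') = z) = a"
    by (rule Least_equality) (use z le_prod_encode_2[of b a] in \<open>auto simp: le_imp_less_Suc\<close>)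
  moreover have "\<exists>j<Suc z. \<exists>b'<Suc z. prod_encode (j, b') = z"
    using z le_prod_encode_1[of a b] le_prod_encode_2[of b a] by (auto intro!: exI[of _ a] exI[of _ b])
  ultimately show ?thesis by (simp add: bmin_eq pfst_def ab)
qed

lemma psnd_bmin: "psnd z = bmin (Suc z) (\<lambda>b. \<exists>a<Suc z. prod_encode (a, b) = z)"
proof -
  obtain a b where ab: "prod_decode z = (a, b)" by (cases "prod_decode z")
  then have z: "z = prod_encode (a, b)" by (metis prod_decode_inverse)
  have "(LEAST b'. \<exists>a'<Suc z. prod_encode (a', b') = z) = b"
    by (rule Least_equality) (use z le_prod_encode_1[of a b] in \<open>auto simp: le_imp_less_Suc\<close>)
  moreover have "\<exists>j<Suc z. \<exists>a'<Suc z. prod_encode (a', j) = z"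
    using z le_prod_encode_1[of a b] le_prod_encode_2[of b a] by (auto intro!: exI[of _ a] exI[of _ b])
  ultimately show ?thesis by (simp add: bmin_eq psnd_def ab)
qed

lemma rc_pfst: "rc A n f \<Longrightarrow> rc A n (\<lambda>xs. pfst (f xs))"
  unfolding pfst_bmin by (auto intro!: rc_intros2 rc_pe)

lemma rc_psnd: "rc A n f \<Longrightarrow> rc A n (\<lambda>xs. psnd (f xs))"
  unfolding psnd_bmin by (auto intro!: rc_intros2 rc_pe)


lemma rc_primrec:
  assumes "rc A n f" "rc A (Suc (Suc n)) (\<lambda>xs. g (hd xs) (hd (tl xs)) (tl (tl xs)))"
    and "\<And>ys. H 0 ys = f ys" "\<And>y ys. H (Suc y) ys = g (H y ys) y ys"
  shows "rc A (Suc n) (\<lambda>xs. H (hd xs) (tl xs))"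
proof -
  have "rc A (Suc (Suc n)) (\<lambda>xs. g (xs ! 0) (xs ! 1) (drop 2 xs))"
    by (rule rc_fix[OF assms(2)]) (auto simp: hd_tl1 numeral_2_eq_2 drop_Suc length_Suc_conv)
  then show ?thesis using rc_prim_raw[of A n f g H] assms(1,3,4) by blast
qed

definition ltl :: "nat \<Rightarrow> nat" where "ltl z = psnd (z - 1)"

lemma ltl_correct: "list_decode (ltl z) = tl (list_decode z)"
proof (cases z)
  case 0 then show ?thesis by (simp add: ltl_def psnd_def prod_decode_def prod_decode_aux.simps)
next
  case (Suc m) then show ?thesis by (cases "prod_decode m") (simp add: ltl_def psnd_def)
qed

definition iterl :: "nat \<Rightarrow> nat \<Rightarrow> nat" where "iterl i z = (ltl ^^ i) z"

lemma iterl_correct: "list_decode (iterl i z) = drop i (list_decode z)"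
  by (induction i) (auto simp: iterl_def ltl_correct drop_Suc tl_drop)

lemma rc_ltl: "rc A n f \<Longrightarrow> rc A n (\<lambda>xs. ltl (f xs))"
  unfolding ltl_def by (auto intro!: rc_intros2 rc_psnd)

lemma rc_iterl0: "rc A (Suc 1) (\<lambda>xs. iterl (hd xs) (tl xs ! 0))"
proof -
  have "rc A (Suc 1) (\<lambda>xs. (\<lambda>i ys. iterl i (ys!0)) (hd xs) (tl xs))"
    by (rule rc_primrec[where f="\<lambda>ys. ys!0" and g="\<lambda>r y ys. ltl r"])
       (auto intro!: rc_intros2 rc_ltl simp: iterl_def)
  then show ?thesis by simp
qed

lemma rc_iterl: "rc A n e \<Longrightarrow> rc A n f \<Longrightarrow> rc A n (\<lambda>xs. iterl (e xs) (f xs))"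
proof -
  assume "rc A n e" "rc A n f"
  moreover have "rc A 2 (\<lambda>xs. iterl (hd xs) (tl xs ! 0))" using rc_iterl0 by (simp add: numeral_2_eq_2)
  ultimately show ?thesis using rc_comp2[of A "\<lambda>xs. iterl (hd xs) (tl xs ! 0)" n e f] by simp
qed

definition lnth :: "nat \<Rightarrow> nat \<Rightarrow> nat" where "lnth z i = pfst (iterl i z - 1)"
definition llen :: "nat \<Rightarrow> nat" where "llen z = bmin (Suc z) (\<lambda>i. iterl i z = 0)"

lemma lnth_correct: "i < length (list_decode z) \<Longrightarrow> lnth z i = list_decode z ! i"
proof -
  assume i: "i < length (list_decode z)"
  let ?w = "iterl i z"
  have d: "list_decode ?w = list_decode z ! i # drop (Suc i) (list_decode z)"
    using i by (simp add: iterl_correct Cons_nth_drop_Suc)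
  then obtain m where m: "?w = Suc m" by (cases ?w) auto
  then show ?thesis using d by (cases "prod_decode m") (auto simp: lnth_def pfst_def)
qed

lemma length_le_encode: "length L \<le> list_encode L"
proof (induction L)
  case (Cons x L) then show ?case using le_prod_encode_2[of "list_encode L" x] by simp
qed simp

lemma llen_correct: "llen z = length (list_decode z)"
proof -
  let ?L = "list_decode z"
  have iff: "iterl i z = 0 \<longleftrightarrow> length ?L \<le> i" for i
  proof -
    have "iterl i z = 0 \<longleftrightarrow> list_decode (iterl i z) = list_decode 0"
      by (simp only: list_decode_eq)
    also have "\<dots> \<longleftrightarrow> length ?L \<le> i" by (simp add: iterl_correct)
    finally show ?thesis .
  qed
  have le: "length ?L \<le> z" using length_le_encode[of ?L] by simp
  have "(LEAST i. iterl i z = 0) = length ?L"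
    by (rule Least_equality) (auto simp: iff)
  then show ?thesis unfolding llen_def bmin_eq using le iff by auto
qed

lemma rc_lnth: "rc A n f \<Longrightarrow> rc A n g \<Longrightarrow> rc A n (\<lambda>xs. lnth (f xs) (g xs))"
  unfolding lnth_def by (auto intro!: rc_intros2 rc_pfst rc_iterl)

lemma rc_llen: "rc A n f \<Longrightarrow> rc A n (\<lambda>xs. llen (f xs))"
  unfolding llen_def by (auto intro!: rc_intros2 rc_iterl)

lemma rc_lcons: "rc A n f \<Longrightarrow> rc A n g \<Longrightarrow> rc A n (\<lambda>xs. Suc (prod_encode (f xs, g xs)))"
  by (auto intro!: rc_intros2 rc_pe)

lemmas rc_intros3 = rc_intros2 rc_pe rc_pfst rc_psnd rc_ltl rc_iterl rc_lnth rc_llen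


section \<open>Combinatorics of the construction\<close>

definition okc :: "(nat \<Rightarrow> nat \<Rightarrow> nat) \<Rightarrow> nat list \<Rightarrow> nat \<Rightarrow> bool" where
  "okc g L y \<longleftrightarrow> (\<forall>a\<in>set L. a < y) \<and> (\<forall>a\<in>set L. \<forall>a'\<in>set L. a \<noteq> a' \<longrightarrow> g a y \<noteq> g a' y) \<and>
     (\<forall>a\<in>set L. \<forall>a1\<in>set L. \<forall>a2\<in>set L. a1 < a2 \<longrightarrow> g a y \<noteq> g a1 a2)"

definition good :: "(nat \<Rightarrow> nat \<Rightarrow> nat) \<Rightarrow> nat list \<Rightarrow> bool" where
  "good g L \<longleftrightarrow> infinite {y. okc g L y}"

definition bad :: "(nat \<Rightarrow> nat \<Rightarrow> nat) \<Rightarrow> nat list \<Rightarrow> nat \<Rightarrow> bool" where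
  "bad g L x \<longleftrightarrow> okc g L x \<and> \<not> good g (x # L)"

lemma rainbow_cons:
  assumes "rainbow g (set L)" "okc g L y"
  shows "rainbow g (set (y # L))"
  unfolding rainbow_def
proof (intro allI impI)
  fix a b u v assume h: "a \<in> set (y # L)" "b \<in> set (y # L)" "u \<in> set (y # L)" "v \<in> set (y # L)"
    "a < b" "u < v" "g a b = g u v"
  have lt: "\<forall>a\<in>set L. a < y" using assms(2) okc_def by blast
  have d1: "\<forall>a\<in>set L. \<forall>a'\<in>set L. a \<noteq> a' \<longrightarrow> g a y \<noteq> g a' y" using assms(2) okc_def by blast
  have d2: "\<forall>a\<in>set L. \<forall>a1\<in>set L. \<forall>a2\<in>set L. a1 < a2 \<longrightarrow> g a y \<noteq> g a1 a2" using assms(2) okc_def by blast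
  consider "b = y" "v = y" | "b = y" "v \<noteq> y" | "b \<noteq> y" "v = y" | "b \<noteq> y" "v \<noteq> y" by blast
  then show "a = u \<and> b = v"
  proof cases
    case 1
    then have "a \<in> set L" "u \<in> set L" using h lt by auto
    then show ?thesis using 1 h d1 by blast
  next
    case 2
    then have "a \<in> set L" "u \<in> set L" "v \<in> set L" using h lt by auto
    then show ?thesis using 2 h d2 by (metis less_irrefl)
  next
    case 3
    then have "a \<in> set L" "u \<in> set L" "b \<in> set L" using h lt by auto
    then show ?thesis using 3 h d2 by (metis less_irrefl)
  next
    case 4
    then have "a \<in> set L" "u \<in> set L" "b \<in> set L" "v \<in> set L" using h lt by auto
    then show ?thesis using h assms(1) unfolding rainbow_def by blast
  qed
qed

lemma kb_finite: "k_bounded k g \<Longrightarrow> finite {(x, y). x < y \<and> g x y = c}"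
  unfolding k_bounded_def by blast
lemma kb_card: "k_bounded k g \<Longrightarrow> card {(x, y). x < y \<and> g x y = c} \<le> k"
  unfolding k_bounded_def by blast

lemma exists_large_ok:
  assumes "good g L" "finite B"
  shows "\<exists>y. okc g L y \<and> (\<forall>b\<in>B. b < y)"
proof -
  have "infinite ({y. okc g L y} - {..Max B})" using assms(1) unfolding good_def
    by (rule Diff_infinite_finite[rotated]) simp
  then obtain y where "y \<in> {y. okc g L y} - {..Max B}"
    using infinite_imp_nonempty by (metis ex_in_conv)
  then have y1: "okc g L y" "\<not> y \<le> Max B" by auto
  have "\<forall>b\<in>B. b < y"
  proof
    fix b assume "b \<in> B"
    then have "b \<le> Max B" using assms(2) by (rule Max_ge[rotated])
    then show "b < y" using y1 by linarith
  qed
  then show ?thesis using y1 by blast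
qed

lemma bad_subset_card:
  assumes kb: "k_bounded k g" and gd: "good g L" and T: "finite T" "T \<subseteq> {x. bad g L x}"
  shows "card T \<le> length L * k"
proof -
  define M where "M = set L \<union> T"
  define C where "C = (\<lambda>(a1, a2). g a1 a2) ` (M \<times> M)"
  have finC: "finite C" unfolding C_def M_def using T(1) by (intro finite_imageI finite_cartesian_product) auto
  define P where "P = (\<Union>c\<in>C. {(x, y). x < y \<and> g x y = c})"
  have finP: "finite P" unfolding P_def by (rule finite_UN_I[OF finC]) (rule kb_finite[OF kb])
  define U where "U = (\<Union>x\<in>T. {y. okc g (x # L) y})"
  have finU: "finite U" unfolding U_def
    by (rule finite_UN_I[OF T(1)]) (use T(2) in \<open>auto simp: bad_def good_def\<close>)
  define B where "B = snd ` P \<union> T \<union> U"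
  have finB: "finite B" unfolding B_def by (intro finite_UnI finite_imageI finP T(1) finU)
  obtain y where y: "okc g L y" "\<forall>b\<in>B. b < y" using exists_large_ok[OF gd finB] by blast
  have ygt: "\<forall>x\<in>T. x < y" using y(2) unfolding B_def by blast
  have yU: "y \<notin> U" using y(2) unfolding B_def by blast
  have yP: "\<And>a. (a, y) \<notin> P"
  proof
    fix a assume "(a, y) \<in> P"
    then have "y \<in> B" unfolding B_def by (intro UnI1 image_eqI[where x="(a,y)"]) auto
    then show False using y(2) by blast
  qed
  have key: "\<exists>a\<in>set L. g x y = g a y" if xT: "x \<in> T" for x
  proof (rule ccontr)
    assume no: "\<not> (\<exists>a\<in>set L. g x y = g a y)"
    have yL: "\<forall>a\<in>set L. a < y" and d1L: "\<forall>a\<in>set L. \<forall>a'\<in>set L. a \<noteq> a' \<longrightarrow> g a y \<noteq> g a' y"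
      using y(1) unfolding okc_def by blast+
    have lt: "\<forall>a\<in>set (x # L). a < y" using yL ygt xT by simp
    have d1: "\<forall>a\<in>set (x # L). \<forall>a'\<in>set (x # L). a \<noteq> a' \<longrightarrow> g a y \<noteq> g a' y"
    proof (intro ballI impI)
      fix a a' assume "a \<in> set (x # L)" "a' \<in> set (x # L)" "a \<noteq> a'"
      then show "g a y \<noteq> g a' y" using d1L no by (cases "a = x"; cases "a' = x") auto
    qed
    have d2: "\<forall>a\<in>set (x # L). \<forall>a1\<in>set (x # L). \<forall>a2\<in>set (x # L). a1 < a2 \<longrightarrow> g a y \<noteq> g a1 a2"
    proof (intro ballI impI)
      fix a a1 a2 assume a: "a \<in> set (x # L)" "a1 \<in> set (x # L)" "a2 \<in> set (x # L)" "a1 < a2"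
      show "g a y \<noteq> g a1 a2"
      proof
        assume eq: "g a y = g a1 a2"
        have "a1 \<in> M" "a2 \<in> M" using a xT unfolding M_def by auto
        then have Cm: "g a1 a2 \<in> C" unfolding C_def by (intro image_eqI[where x="(a1,a2)"]) auto
        have "a < y" using lt a by auto
        then have "(a, y) \<in> {(x, y). x < y \<and> g x y = g a1 a2}" using eq by simp
        then have "(a, y) \<in> P" unfolding P_def using Cm by blast
        then show False using yP by blast
      qed
    qed
    have "okc g (x # L) y" unfolding okc_def using lt d1 d2 by blast
    then have "y \<in> U" unfolding U_def using xT by blast
    then show False using yU by blast
  qed
  have sub: "T \<subseteq> (\<Union>a\<in>set L. {x. x < y \<and> g x y = g a y})"
  proof
    fix x assume "x \<in> T"
    then obtain a where "a \<in> set L" "g x y = g a y" using key by blast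
    then show "x \<in> (\<Union>a\<in>set L. {x. x < y \<and> g x y = g a y})" using ygt \<open>x \<in> T\<close> by blast
  qed
  have cardle: "card {x. x < y \<and> g x y = g a y} \<le> k" for a
  proof -
    have i1: "inj_on (\<lambda>x. (x, y)) {x. x < y \<and> g x y = g a y}" by (auto intro: inj_onI)
    have i2: "(\<lambda>x. (x, y)) ` {x. x < y \<and> g x y = g a y} \<subseteq> {(x, y'). x < y' \<and> g x y' = g a y}" by auto
    have "card {x. x < y \<and> g x y = g a y} \<le> card {(x, y'). x < y' \<and> g x y' = g a y}"
      by (rule card_inj_on_le[OF i1 i2 kb_finite[OF kb]])
    then show ?thesis using kb_card[OF kb, of "g a y"] by linarith
  qed
  have "card T \<le> card (\<Union>a\<in>set L. {x. x < y \<and> g x y = g a y})"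
    by (rule card_mono[OF _ sub]) (rule finite_UN_I, simp, rule finite_subset[of _ "{..<y}"], auto)
  also have "\<dots> \<le> (\<Sum>a\<in>set L. card {x. x < y \<and> g x y = g a y})" by (rule card_UN_le) simp
  also have "\<dots> \<le> (\<Sum>a\<in>set L. k)" by (rule sum_mono) (rule cardle)
  also have "\<dots> = card (set L) * k" by simp
  also have "\<dots> \<le> length L * k" by (simp add: card_length)
  finally show ?thesis .
qed

lemma bad_finite_card:
  assumes kb: "k_bounded k g" and gd: "good g L"
  shows "finite {x. bad g L x} \<and> card {x. bad g L x} \<le> length L * k"
proof -
  have fin: "finite {x. bad g L x}"
  proof (rule ccontr)
    assume "infinite {x. bad g L x}"
    then obtain T where "T \<subseteq> {x. bad g L x}" "finite T" "card T = Suc (length L * k)"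
      using infinite_arbitrarily_large by blast
    then show False using bad_subset_card[OF kb gd] by fastforce
  qed
  then show ?thesis using bad_subset_card[OF kb gd fin] by blast
qed


section \<open>The construction\<close>

definition cnt :: "(nat \<Rightarrow> nat \<Rightarrow> nat) \<Rightarrow> nat list \<Rightarrow> nat \<Rightarrow> nat" where
  "cnt g L y = (\<Sum>y'<y. ind (okc g L y'))"

definition chosen :: "(nat \<Rightarrow> nat \<Rightarrow> nat) \<Rightarrow> nat list \<Rightarrow> nat \<Rightarrow> nat option" where
  "chosen g L r = (if \<exists>y. okc g L y \<and> cnt g L y = r then Some (LEAST y. okc g L y \<and> cnt g L y = r) else None)"

definition chosenb :: "(nat \<Rightarrow> nat \<Rightarrow> nat) \<Rightarrow> nat list \<Rightarrow> nat \<Rightarrow> nat \<Rightarrow> nat option" where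
  "chosenb g L r t = (if \<exists>y<t. okc g L y \<and> cnt g L y = r then Some (LEAST y. okc g L y \<and> cnt g L y = r) else None)"

lemma cnt_Suc: "cnt g L (Suc y) = cnt g L y + ind (okc g L y)"
  by (simp add: cnt_def)

lemma cnt_mono: "y \<le> y' \<Longrightarrow> cnt g L y \<le> cnt g L y'"
  unfolding cnt_def by (rule sum_mono2) auto

lemma cnt_strict: "y < y' \<Longrightarrow> okc g L y \<Longrightarrow> cnt g L y < cnt g L y'"
proof -
  assume "y < y'" "okc g L y"
  then have "cnt g L (Suc y) \<le> cnt g L y'" by (intro cnt_mono) simp
  moreover have "cnt g L (Suc y) = Suc (cnt g L y)" using \<open>okc g L y\<close> by (simp add: cnt_Suc ind_def)
  ultimately show ?thesis by simp
qed

lemma cnt_ge_card: "finite F \<Longrightarrow> F \<subseteq> {y'. y' < y \<and> okc g L y'} \<Longrightarrow> card F \<le> cnt g L y"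
proof -
  assume F: "finite F" "F \<subseteq> {y'. y' < y \<and> okc g L y'}"
  have "card F \<le> card {y'. y' < y \<and> okc g L y'}" by (rule card_mono[OF _ F(2)]) auto
  also have "\<dots> = (\<Sum>y'\<in>{..<y}. ind (okc g L y'))"
    by (simp add: ind_def sum.If_cases Int_def conj_commute)
  finally show ?thesis by (simp add: cnt_def)
qed

lemma chosen_unique: "okc g L y \<Longrightarrow> okc g L y' \<Longrightarrow> cnt g L y = cnt g L y' \<Longrightarrow> y = y'"
  by (metis cnt_strict less_irrefl nat_neq_iff)

lemma chosen_Some: assumes "chosen g L r = Some x" shows "okc g L x \<and> cnt g L x = r"
proof -
  from assms have ex: "\<exists>y. okc g L y \<and> cnt g L y = r" and x: "x = (LEAST y. okc g L y \<and> cnt g L y = r)"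
    by (auto simp: chosen_def split: if_splits)
  show ?thesis unfolding x by (rule LeastI_ex[OF ex])
qed

lemma chosen_Some_iff: "chosen g L r = Some x \<longleftrightarrow> okc g L x \<and> cnt g L x = r"
proof
  assume "okc g L x \<and> cnt g L x = r"
  then have "(LEAST y. okc g L y \<and> cnt g L y = r) = x"
    by (intro Least_equality) (auto dest: chosen_unique)
  then show "chosen g L r = Some x" using \<open>okc g L x \<and> cnt g L x = r\<close> unfolding chosen_def by auto
qed (rule chosen_Some)

lemma chosenb_Some_iff: "chosenb g L r t = Some x \<longleftrightarrow> okc g L x \<and> cnt g L x = r \<and> x < t"
proof
  assume h: "chosenb g L r t = Some x"
  then obtain y where y: "y < t" "okc g L y" "cnt g L y = r" unfolding chosenb_def by (auto split: if_splits)
  then have "(LEAST y. okc g L y \<and> cnt g L y = r) = y"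
    by (intro Least_equality) (auto dest: chosen_unique)
  moreover have "x = (LEAST y. okc g L y \<and> cnt g L y = r)" using h y unfolding chosenb_def by (auto split: if_splits)
  ultimately show "okc g L x \<and> cnt g L x = r \<and> x < t" using y by simp
next
  assume h: "okc g L x \<and> cnt g L x = r \<and> x < t"
  then have "(LEAST y. okc g L y \<and> cnt g L y = r) = x"
    by (intro Least_equality) (auto dest: chosen_unique)
  then show "chosenb g L r t = Some x" using h unfolding chosenb_def by auto
qed

lemma chosen_exists:
  assumes "good g L" shows "\<exists>x. chosen g L r = Some x"
proof -
  obtain F where F: "F \<subseteq> {y. okc g L y}" "finite F" "card F = Suc r"
    using assms infinite_arbitrarily_large unfolding good_def by blast
  have Fne: "F \<noteq> {}" using F(3) by auto
  let ?Y = "Suc (Max F)"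
  have "F \<subseteq> {y'. y' < ?Y \<and> okc g L y'}" using F Max_ge le_imp_less_Suc by blast
  then have "Suc r \<le> cnt g L ?Y" using cnt_ge_card F by metis
  then have ex: "\<exists>y. r < cnt g L (Suc y)" by (intro exI[of _ "Max F"]) simp
  define y0 where "y0 = (LEAST y. r < cnt g L (Suc y))"
  have y0: "r < cnt g L (Suc y0)" unfolding y0_def by (rule LeastI_ex[OF ex])
  have le: "cnt g L y0 \<le> r"
  proof (cases y0)
    case 0 then show ?thesis by (simp add: cnt_def)
  next
    case (Suc y1)
    then have "\<not> r < cnt g L (Suc y1)" unfolding y0_def
      by (metis Suc lessI not_less_Least y0_def)
    then show ?thesis using Suc by simp
  qed
  have "okc g L y0" "cnt g L y0 = r"
    using y0 le by (auto simp: cnt_Suc ind_def split: if_splits)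
  then show ?thesis using chosen_Some_iff by blast
qed

fun run :: "(nat \<Rightarrow> nat \<Rightarrow> nat) \<Rightarrow> (nat \<Rightarrow> nat) \<Rightarrow> nat \<Rightarrow> nat list option" where
  "run g \<rho> 0 = Some []"
| "run g \<rho> (Suc n) = (case run g \<rho> n of None \<Rightarrow> None
     | Some L \<Rightarrow> (case chosen g L (\<rho> n) of None \<Rightarrow> None | Some x \<Rightarrow> Some (x # L)))"

fun runb :: "(nat \<Rightarrow> nat \<Rightarrow> nat) \<Rightarrow> (nat \<Rightarrow> nat) \<Rightarrow> nat \<Rightarrow> nat \<Rightarrow> nat list option" where
  "runb g \<rho> t 0 = Some []"
| "runb g \<rho> t (Suc n) = (case runb g \<rho> t n of None \<Rightarrow> None
     | Some L \<Rightarrow> (case chosenb g L (\<rho> n) t of None \<Rightarrow> None | Some x \<Rightarrow> Some (x # L)))"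

lemma runb_run: "runb g \<rho> t n = Some L \<Longrightarrow> run g \<rho> n = Some L"
proof (induction n arbitrary: L)
  case 0 then show ?case by simp
next
  case (Suc n)
  then obtain L0 x where "runb g \<rho> t n = Some L0" "chosenb g L0 (\<rho> n) t = Some x" "L = x # L0"
    by (auto split: option.splits)
  moreover have "chosen g L0 (\<rho> n) = Some x" using calculation chosenb_Some_iff chosen_Some_iff by blast
  ultimately show ?case using Suc.IH by auto
qed

lemma run_runb: "run g \<rho> n = Some L \<Longrightarrow> \<forall>a\<in>set L. a < t \<Longrightarrow> runb g \<rho> t n = Some L"
proof (induction n arbitrary: L)
  case 0 then show ?case by simp
next
  case (Suc n)
  then obtain L0 x where "run g \<rho> n = Some L0" "chosen g L0 (\<rho> n) = Some x" "L = x # L0"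
    by (auto split: option.splits)
  moreover have "chosenb g L0 (\<rho> n) t = Some x" using calculation Suc.prems chosenb_Some_iff chosen_Some_iff by auto
  ultimately show ?case using Suc by auto
qed

definition fails :: "(nat \<Rightarrow> nat \<Rightarrow> nat) \<Rightarrow> (nat \<Rightarrow> nat) \<Rightarrow> nat \<Rightarrow> bool" where
  "fails g \<rho> n \<longleftrightarrow> (\<exists>L x. run g \<rho> n = Some L \<and> chosen g L (\<rho> n) = Some x \<and> bad g L x)"

lemma good_Nil: "good g []"
  unfolding good_def okc_def by simp

lemma run_invariant:
  assumes nf: "\<forall>n. \<not> fails g \<rho> n"
  shows "\<exists>L. run g \<rho> n = Some L \<and> good g L \<and> length L = n \<and> rainbow g (set L) \<and> distinct L"
proof (induction n)
  case 0 then show ?case using good_Nil by (simp add: rainbow_def)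
next
  case (Suc n)
  then obtain L where L: "run g \<rho> n = Some L" "good g L" "length L = n" "rainbow g (set L)" "distinct L" by blast
  obtain x where x: "chosen g L (\<rho> n) = Some x" using chosen_exists[OF L(2)] by blast
  have ok: "okc g L x" using chosen_Some[OF x] by blast
  have "\<not> bad g L x" using nf L(1) x unfolding fails_def by blast
  then have "good g (x # L)" using ok unfolding bad_def by blast
  moreover have "rainbow g (set (x # L))" by (rule rainbow_cons[OF L(4) ok])
  moreover have "x \<notin> set L" using ok unfolding okc_def by blast
  ultimately show ?case using L x by auto
qed

lemma run_elems_lt: "run g \<rho> (Suc n) = Some (x # L) \<Longrightarrow> \<forall>a\<in>set L. a < x"
  by (auto split: option.splits dest!: chosen_Some simp: okc_def)

lemma run_mono: "run g \<rho> n = Some L \<Longrightarrow> m \<le> n \<Longrightarrow> \<exists>L'. run g \<rho> m = Some L' \<and> set L' \<subseteq> set L"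
proof (induction n arbitrary: L)
  case 0 then show ?case by simp
next
  case (Suc n)
  then obtain L0 x where L0: "run g \<rho> n = Some L0" "L = x # L0"
    by (auto split: option.splits)
  show ?case
  proof (cases "m = Suc n")
    case True then show ?thesis using Suc by auto
  next
    case False
    then have "m \<le> n" using Suc by simp
    then show ?thesis using Suc.IH[OF L0(1)] L0 by auto
  qed
qed

definition Sset :: "(nat \<Rightarrow> nat \<Rightarrow> nat) \<Rightarrow> (nat \<Rightarrow> nat) \<Rightarrow> nat set" where
  "Sset g \<rho> = {x. \<exists>n L. run g \<rho> n = Some L \<and> x \<in> set L}"

lemma run_length: "run g \<rho> n = Some L \<Longrightarrow> length L = n"
  by (induction n arbitrary: L) (auto split: option.splits)

lemma run_distinct_lt: "run g \<rho> n = Some L \<Longrightarrow> distinct L \<and> (\<forall>j<length L. \<forall>j'<length L. j < j' \<longrightarrow> L ! j' < L ! j)"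
proof (induction n arbitrary: L)
  case 0 then show ?case by simp
next
  case (Suc n)
  then obtain L0 x where L0: "run g \<rho> n = Some L0" "L = x # L0"
    by (auto split: option.splits)
  have lt: "\<forall>a\<in>set L0. a < x" using run_elems_lt Suc.prems L0 by blast
  show ?case
  proof
    show "distinct L" using Suc.IH[OF L0(1)] lt L0(2) by auto
    show "\<forall>j<length L. \<forall>j'<length L. j < j' \<longrightarrow> L ! j' < L ! j"
    proof (intro allI impI)
      fix j j' assume "j < length L" "j' < length L" "j < j'"
      then show "L ! j' < L ! j" using Suc.IH[OF L0(1)] lt L0(2)
        by (cases j; cases j') (auto simp: nth_mem)
    qed
  qed
qed

lemma Sset_mem:
  assumes nf: "\<forall>n. \<not> fails g \<rho> n" and L: "run g \<rho> (Suc a) = Some L"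
  shows "a \<in> Sset g \<rho> \<longleftrightarrow> a \<in> set L"
proof
  assume "a \<in> set L" then show "a \<in> Sset g \<rho>" using L unfolding Sset_def by blast
next
  assume "a \<in> Sset g \<rho>"
  then obtain n L1 where n: "run g \<rho> n = Some L1" "a \<in> set L1" unfolding Sset_def by blast
  show "a \<in> set L"
  proof (cases "n \<le> Suc a")
    case True
    then show ?thesis using run_mono[OF L True] n by (metis option.inject subsetD)
  next
    case False
    have "\<exists>m L2. m \<le> Suc a \<and> run g \<rho> m = Some L2 \<and> a \<in> set L2"
    proof -
      obtain j where j: "j < length L1" "L1 ! j = a" using n(2) by (metis in_set_conv_nth)
      have len: "length L1 = n" by (rule run_length[OF n(1)])
      define m where "m = n - j"
      have mn: "m \<le> n" unfolding m_def by simp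
      obtain L2 where L2: "run g \<rho> m = Some L2" "set L2 \<subseteq> set L1" using run_mono[OF n(1) mn] by blast
      have "drop j L1 = L2"
      proof -
        have "\<And>n' L'. run g \<rho> n' = Some L' \<Longrightarrow> \<forall>d\<le>n'. run g \<rho> (n' - d) = Some (drop d L')"
        proof -
          fix n' L' assume "run g \<rho> n' = Some L'"
          then show "\<forall>d\<le>n'. run g \<rho> (n' - d) = Some (drop d L')"
          proof (induction n' arbitrary: L')
            case 0 then show ?case by simp
          next
            case (Suc n')
            then obtain L0 x where L0: "run g \<rho> n' = Some L0" "L' = x # L0"
              by (auto split: option.splits)
            show ?case
            proof (intro allI impI)
              fix d assume "d \<le> Suc n'"
              then show "run g \<rho> (Suc n' - d) = Some (drop d L')"
                using Suc.IH[OF L0(1)] Suc.prems L0 by (cases d) auto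
            qed
          qed
        qed
        then show ?thesis using n(1) L2(1) j(1) len unfolding m_def by fastforce
      qed
      moreover have "a \<in> set (drop j L1)" using j by (metis Cons_nth_drop_Suc list.set_intros(1))
      moreover have "m \<le> Suc a"
      proof -
        have "\<forall>j'<length L1. j < j' \<longrightarrow> L1 ! j' < L1 ! j" using run_distinct_lt[OF n(1)] j by blast
        then have "(\<lambda>j'. L1 ! j') ` {j<..<length L1} \<subseteq> {..<a}" using j by auto
        moreover have "inj_on (\<lambda>j'. L1 ! j') {j<..<length L1}"
          using run_distinct_lt[OF n(1)] by (auto simp: inj_on_def nth_eq_iff_index_eq)
        ultimately have "card {j<..<length L1} \<le> card {..<a}" by (metis card_inj_on_le finite_lessThan)
        then show ?thesis unfolding m_def using len j by simp
      qed
      ultimately show ?thesis using L2 by blast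
    qed
    then obtain m L2 where "m \<le> Suc a" "run g \<rho> m = Some L2" "a \<in> set L2" by blast
    then show ?thesis using run_mono[OF L] by (metis option.inject subsetD)
  qed
qed

lemma Sset_good:
  assumes nf: "\<forall>n. \<not> fails g \<rho> n"
  shows "infinite (Sset g \<rho>) \<and> rainbow g (Sset g \<rho>)"
proof
  show "infinite (Sset g \<rho>)"
  proof
    assume fin: "finite (Sset g \<rho>)"
    obtain L where L: "run g \<rho> (Suc (card (Sset g \<rho>))) = Some L" "length L = Suc (card (Sset g \<rho>))" "distinct L"
      using run_invariant[OF nf] by blast
    have "set L \<subseteq> Sset g \<rho>" using L unfolding Sset_def by blast
    then have "card (set L) \<le> card (Sset g \<rho>)" using fin by (rule card_mono[rotated])
    then show False using L distinct_card by fastforce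
  qed
  show "rainbow g (Sset g \<rho>)"
    unfolding rainbow_def
  proof (intro allI impI)
    fix x y u v assume h: "x \<in> Sset g \<rho>" "y \<in> Sset g \<rho>" "u \<in> Sset g \<rho>" "v \<in> Sset g \<rho>" "x < y" "u < v" "g x y = g u v"
    let ?N = "Suc (x + y + u + v)"
    obtain L where L: "run g \<rho> ?N = Some L" "rainbow g (set L)"
      using run_invariant[OF nf] by blast
    have "\<And>z. z \<le> x + y + u + v \<Longrightarrow> z \<in> Sset g \<rho> \<Longrightarrow> z \<in> set L"
    proof -
      fix z assume z: "z \<le> x + y + u + v" "z \<in> Sset g \<rho>"
      obtain L' where L': "run g \<rho> (Suc z) = Some L'" using run_invariant[OF nf] by blast
      have "z \<in> set L'" using Sset_mem[OF nf L'] z by blast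
      moreover obtain L'' where "run g \<rho> (Suc z) = Some L''" "set L'' \<subseteq> set L"
        using run_mono[OF L(1), of "Suc z"] z by auto
      ultimately show "z \<in> set L" using L' by auto
    qed
    then have "x \<in> set L" "y \<in> set L" "u \<in> set L" "v \<in> set L" using h by auto
    then show "x = u \<and> y = v" using L(2) h unfolding rainbow_def by blast
  qed
qed


section \<open>Code-level construction\<close>

definition lenb :: "nat \<Rightarrow> nat \<Rightarrow> nat \<Rightarrow> nat" where "lenb c k b = c + 2 * b + k + 1"
definition startb :: "nat \<Rightarrow> nat \<Rightarrow> nat \<Rightarrow> nat" where "startb c k b = (\<Sum>b'<b. lenb c k b')"

definition rho :: "(nat \<Rightarrow> nat \<Rightarrow> nat) \<Rightarrow> nat \<Rightarrow> nat \<Rightarrow> nat \<Rightarrow> nat \<Rightarrow> nat \<Rightarrow> nat" where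
  "rho \<beta> s c k i n = (\<Sum>j<lenb c k (prod_encode (i, n)). 2 ^ j * \<beta> s (startb c k (prod_encode (i, n)) + j))"

definition okcc :: "(nat \<Rightarrow> nat \<Rightarrow> nat \<Rightarrow> nat) \<Rightarrow> nat \<Rightarrow> nat \<Rightarrow> nat \<Rightarrow> bool" where
  "okcc G i z y \<longleftrightarrow> (\<forall>j<llen z. lnth z j < y) \<and>
     (\<forall>j<llen z. \<forall>j'<llen z. lnth z j \<noteq> lnth z j' \<longrightarrow> G i (lnth z j) y \<noteq> G i (lnth z j') y) \<and>
     (\<forall>j<llen z. \<forall>j1<llen z. \<forall>j2<llen z. lnth z j1 < lnth z j2 \<longrightarrow> G i (lnth z j) y \<noteq> G i (lnth z j1) (lnth z j2))"

lemma okcc_eq: "okcc G i (list_encode L) y = okc (G i) L y"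
  unfolding okcc_def okc_def llen_correct list_encode_inverse
  by (simp add: lnth_correct all_set_conv_all_nth)

definition cntc :: "(nat \<Rightarrow> nat \<Rightarrow> nat \<Rightarrow> nat) \<Rightarrow> nat \<Rightarrow> nat \<Rightarrow> nat \<Rightarrow> nat" where
  "cntc G i z y = (\<Sum>y'<y. ind (okcc G i z y'))"

lemma cntc_eq: "cntc G i (list_encode L) y = cnt (G i) L y"
  unfolding cntc_def cnt_def okcc_eq ..

definition choosec :: "(nat \<Rightarrow> nat \<Rightarrow> nat \<Rightarrow> nat) \<Rightarrow> nat \<Rightarrow> nat \<Rightarrow> nat \<Rightarrow> nat \<Rightarrow> nat" where
  "choosec G i z r t = bmin t (\<lambda>y. okcc G i z y \<and> cntc G i z y = r)"

lemma choosec_eq: "chosenb (G i) L r t = (if choosec G i (list_encode L) r t < t then Some (choosec G i (list_encode L) r t) else None)"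
  unfolding chosenb_def choosec_def bmin_eq okcc_eq cntc_eq by (auto intro: le_less_trans[OF Least_le])

definition stepc :: "(nat \<Rightarrow> nat \<Rightarrow> nat \<Rightarrow> nat) \<Rightarrow> nat \<Rightarrow> nat \<Rightarrow> nat \<Rightarrow> nat \<Rightarrow> nat" where
  "stepc G i z r t = (if z = 0 then 0 else if choosec G i (z - 1) r t < t
     then Suc (Suc (prod_encode (choosec G i (z - 1) r t, z - 1))) else 0)"

fun runc :: "(nat \<Rightarrow> nat \<Rightarrow> nat \<Rightarrow> nat) \<Rightarrow> (nat \<Rightarrow> nat \<Rightarrow> nat) \<Rightarrow> nat \<Rightarrow> nat \<Rightarrow> nat \<Rightarrow> nat \<Rightarrow> nat \<Rightarrow> nat \<Rightarrow> nat" where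
  "runc G \<beta> k 0 c i t s = 1"
| "runc G \<beta> k (Suc n) c i t s = stepc G i (runc G \<beta> k n c i t s) (rho \<beta> s c k i n) t"

definition ocode :: "nat list option \<Rightarrow> nat" where
  "ocode x = (case x of None \<Rightarrow> 0 | Some L \<Rightarrow> Suc (list_encode L))"

lemma runc_eq: "runc G \<beta> k n c i t s = ocode (runb (G i) (rho \<beta> s c k i) t n)"
proof (induction n)
  case 0 then show ?case by (simp add: ocode_def)
next
  case (Suc n)
  show ?case
  proof (cases "runb (G i) (rho \<beta> s c k i) t n")
    case None then show ?thesis using Suc by (simp add: ocode_def stepc_def)
  next
    case (Some L) then show ?thesis using Suc by (simp add: ocode_def stepc_def choosec_eq)
  qed
qed

lemma rc_comp3: "rc A 3 h \<Longrightarrow> rc A n f \<Longrightarrow> rc A n g \<Longrightarrow> rc A n e \<Longrightarrow> rc A n (\<lambda>xs. h [f xs, g xs, e xs])"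
  using rc_comp[of A "[f, g, e]" h n] by (simp add: numeral_3_eq_3)

lemma rc_use3:
  assumes "rc A 3 (\<lambda>xs. G (xs!0) (xs!1) (xs!2))"
  shows "rc A n e1 \<Longrightarrow> rc A n e2 \<Longrightarrow> rc A n e3 \<Longrightarrow> rc A n (\<lambda>xs. G (e1 xs) (e2 xs) (e3 xs))"
  using rc_comp3[OF assms] by simp

lemma rc_use2:
  assumes "rc A 2 (\<lambda>xs. G (xs!0) (xs!1))"
  shows "rc A n e1 \<Longrightarrow> rc A n e2 \<Longrightarrow> rc A n (\<lambda>xs. G (e1 xs) (e2 xs))"
  using rc_comp2[OF assms] by simp

context
  fixes A :: "nat \<Rightarrow> bool" and G :: "nat \<Rightarrow> nat \<Rightarrow> nat \<Rightarrow> nat" and \<beta> :: "nat \<Rightarrow> nat \<Rightarrow> nat" and k :: nat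
  assumes rcG: "rc A 3 (\<lambda>xs. G (xs!0) (xs!1) (xs!2))"
begin

lemmas rcG' = rc_use3[OF rcG]

lemma rc_okcc: "rc A n e1 \<Longrightarrow> rc A n e2 \<Longrightarrow> rc A n e3 \<Longrightarrow> rcp A n (\<lambda>xs. okcc G (e1 xs) (e2 xs) (e3 xs))"
  unfolding okcc_def by (intro rc_intros3 rcG' rcp_ball rcp_imp rcp_conj; (intro rc_intros3 rcG')?; simp)

lemma rc_cntc: "rc A n e1 \<Longrightarrow> rc A n e2 \<Longrightarrow> rc A n e3 \<Longrightarrow> rc A n (\<lambda>xs. cntc G (e1 xs) (e2 xs) (e3 xs))"
  unfolding cntc_def by (intro rc_intros3 rc_okcc; simp)

lemma rc_choosec: "rc A n e1 \<Longrightarrow> rc A n e2 \<Longrightarrow> rc A n e3 \<Longrightarrow> rc A n e4 \<Longrightarrow>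
   rc A n (\<lambda>xs. choosec G (e1 xs) (e2 xs) (e3 xs) (e4 xs))"
  unfolding choosec_def by (intro rc_intros3 rc_okcc rc_cntc; simp)

lemma rc_stepc: "rc A n e1 \<Longrightarrow> rc A n e2 \<Longrightarrow> rc A n e3 \<Longrightarrow> rc A n e4 \<Longrightarrow>
   rc A n (\<lambda>xs. stepc G (e1 xs) (e2 xs) (e3 xs) (e4 xs))"
  unfolding stepc_def by (intro rc_intros3 rc_choosec; simp)

end

context
  fixes A :: "nat \<Rightarrow> bool" and G :: "nat \<Rightarrow> nat \<Rightarrow> nat \<Rightarrow> nat" and \<beta> :: "nat \<Rightarrow> nat \<Rightarrow> nat" and k :: nat
  assumes rcG: "rc A 3 (\<lambda>xs. G (xs!0) (xs!1) (xs!2))"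
    and rcB: "rc A 2 (\<lambda>xs. \<beta> (xs!0) (xs!1))"
begin

lemmas rcB' = rc_use2[OF rcB]
lemmas rc_stepc' = rc_stepc[OF rcG]

lemma rc_rho: "rc A n e1 \<Longrightarrow> rc A n e2 \<Longrightarrow> rc A n e3 \<Longrightarrow> rc A n e4 \<Longrightarrow>
   rc A n (\<lambda>xs. rho \<beta> (e1 xs) (e2 xs) k (e3 xs) (e4 xs))"
  unfolding rho_def lenb_def startb_def by (intro rc_intros3 rcB'; simp)

lemma rc_runc0: "rc A (Suc 4) (\<lambda>xs. (\<lambda>n ys. runc G \<beta> k n (ys!0) (ys!1) (ys!2) (ys!3)) (hd xs) (tl xs))"
  by (rule rc_primrec[where f="\<lambda>ys. 1" and g="\<lambda>r y ys. stepc G (ys!1) r (rho \<beta> (ys!3) (ys!0) k (ys!1) y) (ys!2)"])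
     ((intro rc_intros3 rc_stepc' rc_rho; simp) | simp)+

lemma rc_runc: "rc A n e0 \<Longrightarrow> rc A n e1 \<Longrightarrow> rc A n e2 \<Longrightarrow> rc A n e3 \<Longrightarrow> rc A n e4 \<Longrightarrow>
   rc A n (\<lambda>xs. runc G \<beta> k (e0 xs) (e1 xs) (e2 xs) (e3 xs) (e4 xs))"
proof -
  assume h: "rc A n e0" "rc A n e1" "rc A n e2" "rc A n e3" "rc A n e4"
  have "rc A n (\<lambda>xs. (\<lambda>ys. runc G \<beta> k (hd ys) (tl ys!0) (tl ys!1) (tl ys!2) (tl ys!3)) (map (\<lambda>f. f xs) [e0, e1, e2, e3, e4]))"
    by (rule rc_comp) (use h rc_runc0 in \<open>auto simp: numeral_eq_Suc\<close>)
  then show ?thesis by simp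
qed

end


lemma enc_inj: "enc p = enc q \<Longrightarrow> p = q"
proof (induction p arbitrary: q)
  case Zero then show ?case by (cases q) auto
next
  case Succ then show ?case by (cases q) auto
next
  case (Proj i) then show ?case by (cases q) auto
next
  case (Comp f gs)
  then show ?case
  proof (cases q)
    case (Comp f' gs')
    with Comp.prems have e: "enc f = enc f'" "list_encode (map enc gs) = list_encode (map enc gs')" by auto
    then have "map enc gs = map enc gs'" by (simp add: list_encode_eq)
    moreover have "\<And>gs'. map enc gs = map enc gs' \<Longrightarrow> gs = gs'"
      using Comp.IH(2)
    proof (induction gs)
      case Nil then show ?case by simp
    next
      case (Cons g gs)
      then show ?case by (cases gs') auto
    qed
    ultimately show ?thesis using Comp.IH(1) e(1) \<open>q = Comp f' gs'\<close> by blast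
  qed auto
next
  case (Prim f g) then show ?case by (cases q) auto
next
  case (Mn f) then show ?case by (cases q) auto
next
  case Orc then show ?case by (cases q) auto
qed

fun noorc :: "rf \<Rightarrow> rf" where
  "noorc Zero = Zero"
| "noorc Succ = Succ"
| "noorc (Proj i) = Proj i"
| "noorc (Comp f gs) = Comp (noorc f) (map noorc gs)"
| "noorc (Prim f g) = Prim (noorc f) (noorc g)"
| "noorc (Mn f) = Mn (noorc f)"
| "noorc Orc = Zero"

lemma noorc_eval: "evalr empty_oracle p xs v \<Longrightarrow> evalr A (noorc p) xs v"
proof (induction rule: evalr.induct)
  case (ev_Comp xs gs ys f v)
  have "list_all2 (\<lambda>g. evalr A g xs) (map noorc gs) ys"
    using ev_Comp.IH(1) by (simp add: list_all2_conv_all_nth)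
  then show ?case using ev_Comp.IH(2) by (auto intro: evalr.ev_Comp)
next
  case (ev_Orc x xs) then show ?case by (auto simp: empty_oracle_def intro: evalr.intros)
next
  case (ev_Proj i xs) then show ?case using evalr.ev_Proj[of A i xs] by simp
qed (auto intro: evalr.intros)

lemma rc_coloring:
  assumes "computable_coloring_seq f"
  shows "rc A 3 (\<lambda>xs. f (xs!0) (xs!1) (max (xs!2) (Suc (xs!1))))"
proof -
  obtain p where p: "\<forall>i x y. x < y \<longrightarrow> evalr empty_oracle p [i, x, y] (f i x y)"
    using assms unfolding computable_coloring_seq_def by blast
  have "rc A 3 (\<lambda>xs. max (xs!2) (Suc (xs!1)))"
    unfolding max_def by (intro rc_intros3; simp)
  then obtain pm where pm: "\<forall>xs. length xs = 3 \<longrightarrow> evalr A pm xs (max (xs!2) (Suc (xs!1)))"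
    unfolding rc_def by blast
  show ?thesis unfolding rc_def
  proof (intro exI[of _ "Comp (noorc p) [Proj 0, Proj 1, pm]"] allI impI)
    fix xs :: "nat list" assume l: "length xs = 3"
    then obtain i x y where xs: "xs = [i, x, y]" by (auto simp: numeral_3_eq_3 length_Suc_conv)
    have e1: "evalr A (noorc p) [i, x, max y (Suc x)] (f i x (max y (Suc x)))"
      using p noorc_eval by auto
    have e2: "list_all2 (\<lambda>g. evalr A g xs) [Proj 0, Proj 1, pm] [i, x, max y (Suc x)]"
      using pm[rule_format, of "[i,x,y]"] xs evalr.ev_Proj[of A 0 xs] evalr.ev_Proj[of A 1 xs] by auto
    show "evalr A (Comp (noorc p) [Proj 0, Proj 1, pm]) xs (f (xs!0) (xs!1) (max (xs!2) (Suc (xs!1))))"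
      using evalr.ev_Comp[OF e2 e1] xs by simp
  qed
qed

lemma evalr_Mn:
  assumes q: "\<forall>xs'. length xs' = Suc n \<longrightarrow> evalr A q xs' (F xs')" and l: "length xs = n"
    and w: "F (w # xs) = 0"
  shows "evalr A (Mn q) xs (LEAST w. F (w # xs) = 0)"
proof (rule evalr.ev_Mn)
  have "F ((LEAST w. F (w # xs) = 0) # xs) = 0" by (rule LeastI[of "\<lambda>w. F (w # xs) = 0", OF w])
  moreover have "evalr A q ((LEAST w. F (w # xs) = 0) # xs) (F ((LEAST w. F (w # xs) = 0) # xs))"
    using q l by simp
  ultimately show "evalr A q ((LEAST w. F (w # xs) = 0) # xs) 0" by simp
  show "\<forall>z<(LEAST w. F (w # xs) = 0). \<exists>v. evalr A q (z # xs) v \<and> v \<noteq> 0"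
    using q l not_less_Least[of _ "\<lambda>w. F (w # xs) = 0"] by force
qed

lemma evalr_Mn_inv:
  assumes q: "\<forall>xs'. length xs' = Suc n \<longrightarrow> evalr A q xs' (F xs')" and l: "length xs = n"
    and e: "evalr A (Mn q) xs v"
  shows "F (v # xs) = 0"
proof -
  from e have "evalr A q (v # xs) 0" by (rule MnE) simp
  moreover have "evalr A q (v # xs) (F (v # xs))" using q l by simp
  ultimately show ?thesis using evalr_det by metis
qed

section \<open>Querying the halting problem\<close>

definition qcode :: "nat \<Rightarrow> nat \<Rightarrow> nat" where
  "qcode a P = prod_encode (3, prod_encode (a, Suc (prod_encode (prod_encode (2, 0),
      Suc (prod_encode (prod_encode (2, Suc P), 0))))))"

lemma qcode_inj: "qcode a P = qcode a' P' \<Longrightarrow> a = a' \<and> P = P'"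
  unfolding qcode_def by simp

definition qprop :: "(nat \<Rightarrow> nat \<Rightarrow> nat \<Rightarrow> nat) \<Rightarrow> nat \<Rightarrow> nat \<Rightarrow> bool" where
  "qprop G P y \<longleftrightarrow> psnd (psnd P) < y \<and> okcc G (pfst P) (pfst (psnd P)) y"

definition Kf :: "(nat \<Rightarrow> nat \<Rightarrow> nat \<Rightarrow> nat) \<Rightarrow> nat list \<Rightarrow> nat" where
  "Kf G xs = ind (\<not> (xs!1 = qcode (pfst (xs!0)) (pfst (psnd (xs!0))) \<and> qprop G (pfst (psnd (xs!0))) (psnd (psnd (xs!0)))))"

lemma halting_query:
  assumes rcG: "rc empty_oracle 3 (\<lambda>xs. G (xs!0) (xs!1) (xs!2))"
  shows "\<exists>EH. \<forall>P. halting (qcode EH P) \<longleftrightarrow> (\<exists>y. qprop G P y)"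
proof -
  have "rc empty_oracle 3 (Kf G)"
    unfolding Kf_def qcode_def qprop_def
    by (intro rc_intros3 rc_okcc[OF rcG]; simp)
  then obtain k0 where k0: "\<forall>xs. length xs = 3 \<longrightarrow> evalr empty_oracle k0 xs (Kf G xs)"
    unfolding rc_def by blast
  let ?H = "Mn k0"
  have k0': "\<forall>xs'. length xs' = Suc 2 \<longrightarrow> evalr empty_oracle k0 xs' (Kf G xs')" using k0 by simp
  show ?thesis
  proof (intro exI[of _ "enc ?H"] allI)
    fix P
    let ?c = "qcode (enc ?H) P"
    let ?Q = "Comp ?H [Proj 0, Proj (Suc P)]"
    have encQ: "enc ?Q = ?c" by (simp add: qcode_def)
    have projs: "list_all2 (\<lambda>g. evalr empty_oracle g [?c]) [Proj 0, Proj (Suc P)] [?c, 0]"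
      using evalr.ev_Proj[of empty_oracle 0 "[?c]"] evalr.ev_Proj[of empty_oracle "Suc P" "[?c]"] by simp
    show "halting ?c \<longleftrightarrow> (\<exists>y. qprop G P y)"
    proof
      assume "halting ?c"
      then obtain p v where pv: "enc p = ?c" "evalr empty_oracle p [?c] v" unfolding halting_def by blast
      have "p = ?Q" using pv(1) encQ enc_inj by metis
      then obtain ys where ys: "list_all2 (\<lambda>g. evalr empty_oracle g [?c]) [Proj 0, Proj (Suc P)] ys"
        "evalr empty_oracle ?H ys v" using pv(2) by (auto elim: CompE)
      have "ys = [?c, 0]"
        using ys(1) projs evalr_det by (auto simp: list_all2_Cons1)
      then have "Kf G (v # [?c, 0]) = 0" using evalr_Mn_inv[OF k0' _ ys(2)] by simp
      then have "?c = qcode (pfst v) (pfst (psnd v)) \<and> qprop G (pfst (psnd v)) (psnd (psnd v))"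
        unfolding Kf_def by (simp add: ind_def split: if_splits)
      then show "\<exists>y. qprop G P y" using qcode_inj by metis
    next
      assume "\<exists>y. qprop G P y"
      then obtain y where y: "qprop G P y" by blast
      let ?w = "prod_encode (enc ?H, prod_encode (P, y))"
      have "Kf G (?w # [?c, 0]) = 0" using y by (simp add: Kf_def ind_def)
      then have "evalr empty_oracle ?H [?c, 0] (LEAST w. Kf G (w # [?c, 0]) = 0)"
        by (intro evalr_Mn[OF k0']) simp_all
      then have "evalr empty_oracle ?Q [?c] (LEAST w. Kf G (w # [?c, 0]) = 0)"
        using projs by (auto intro: evalr.ev_Comp)
      then show "halting ?c" unfolding halting_def using encQ by blast
    qed
  qed
qed


lemma cyl_emb: "cyl \<sigma> = prod_emb UNIV (\<lambda>_. measure_pmf (bernoulli_pmf (1/2))) {..<length \<sigma>} (PiE {..<length \<sigma>} (\<lambda>i. {\<sigma>!i}))"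
  unfolding cyl_def prod_emb_def by (auto simp: PiE_def extensional_def restrict_def Pi_def)

lemma cyl_sets[measurable]: "cyl \<sigma> \<in> sets cantor"
  unfolding cantor_def cyl_emb by (rule sets_PiM_I) auto

lemma emeasure_cyl: "emeasure cantor (cyl \<sigma>) = ennreal ((1/2) ^ length \<sigma>)"
proof -
  have "emeasure cantor (cyl \<sigma>) = (\<Prod>i\<in>{..<length \<sigma>}. emeasure (measure_pmf (bernoulli_pmf (1/2))) {\<sigma>!i})"
    unfolding cantor_def cyl_emb
    by (rule emeasure_PiM_emb) (auto simp: prob_space_measure_pmf)
  also have "\<dots> = (\<Prod>i\<in>{..<length \<sigma>}. ennreal (1/2))"
    by (simp add: emeasure_pmf_single pmf_bernoulli_half)
  also have "\<dots> = ennreal (1/2) ^ length \<sigma>" by (simp only: prod_constant card_lessThan)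
  also have "\<dots> = ennreal ((1/2) ^ length \<sigma>)" by (rule ennreal_power) simp
  finally show ?thesis .
qed

lemma open_class_sets: "open_class V \<in> sets cantor"
  unfolding open_class_def by (intro sets.countable_UN') auto


fun numl :: "bool list \<Rightarrow> nat" where
  "numl [] = 0"
| "numl (b # \<rho>) = (if b then 1 else 0) + 2 * numl \<rho>"

lemma numl_inj: "length \<rho> = length \<rho>' \<Longrightarrow> numl \<rho> = numl \<rho>' \<Longrightarrow> \<rho> = \<rho>'"
proof (induction \<rho> arbitrary: \<rho>')
  case Nil then show ?case by simp
next
  case (Cons b \<rho>)
  then obtain b' r' where r: "\<rho>' = b' # r'" by (cases \<rho>') auto
  with Cons.prems have e: "(if b then 1 else 0) + 2 * numl \<rho> = (if b' then 1 else (0::nat)) + 2 * numl r'" by simp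
  then have "b = b'" by (cases b; cases b'; simp; presburger)
  with e have "numl \<rho> = numl r'" by simp
  then show ?case using Cons r \<open>b = b'\<close> by simp
qed

lemma finite_strs: "finite {\<tau> :: bool list. length \<tau> = a}"
  using finite_lists_length_eq[of "UNIV :: bool set" a] by simp

lemma card_strs: "card {\<tau> :: bool list. length \<tau> = a} = 2 ^ a"
  using card_lists_length_eq[of "UNIV :: bool set" a] by simp

lemma cover_bound:
  fixes a l N :: nat and R :: "bool list \<Rightarrow> nat set"
  assumes R: "\<And>\<tau>. finite (R \<tau>) \<and> card (R \<tau>) \<le> N"
  defines "Cov \<equiv> (\<Union>\<tau>\<in>{\<tau>. length \<tau> = a}. \<Union>\<rho>\<in>{\<rho>. length \<rho> = l \<and> numl \<rho> \<in> R \<tau>}. cyl (\<tau> @ \<rho>))"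
  shows "Cov \<in> sets cantor" "emeasure cantor Cov \<le> ennreal (real N * (1/2) ^ l)"
proof -
  let ?T = "{\<tau> :: bool list. length \<tau> = a}"
  let ?S = "\<lambda>\<tau>. {\<rho>. length \<rho> = l \<and> numl \<rho> \<in> R \<tau>}"
  have finS: "finite (?S \<tau>)" for \<tau> by (rule finite_subset[OF _ finite_strs[of l]]) auto
  have cardS: "card (?S \<tau>) \<le> N" for \<tau>
  proof -
    have "inj_on numl (?S \<tau>)" by (auto intro!: inj_onI numl_inj)
    moreover have "numl ` ?S \<tau> \<subseteq> R \<tau>" by auto
    ultimately have "card (?S \<tau>) \<le> card (R \<tau>)" using R card_inj_on_le by blast
    then show ?thesis using R[of \<tau>] by linarith
  qed
  have inner_sets: "(\<Union>\<rho>\<in>?S \<tau>. cyl (\<tau> @ \<rho>)) \<in> sets cantor" for \<tau>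
    by (intro sets.finite_UN finS) auto
  show "Cov \<in> sets cantor" unfolding Cov_def
    by (intro sets.finite_UN finite_strs inner_sets)
  let ?q = "ennreal ((1/2) ^ (a + l))"
  have inner: "emeasure cantor (\<Union>\<rho>\<in>?S \<tau>. cyl (\<tau> @ \<rho>)) \<le> of_nat N * ?q" if "length \<tau> = a" for \<tau>
  proof -
    have "emeasure cantor (\<Union>\<rho>\<in>?S \<tau>. cyl (\<tau> @ \<rho>)) \<le> (\<Sum>\<rho>\<in>?S \<tau>. emeasure cantor (cyl (\<tau> @ \<rho>)))"
      by (rule emeasure_subadditive_finite[OF finS]) auto
    also have "\<dots> = (\<Sum>\<rho>\<in>?S \<tau>. ?q)"
      by (rule sum.cong) (auto simp: emeasure_cyl that)
    also have "\<dots> = of_nat (card (?S \<tau>)) * ?q" by simp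
    also have "\<dots> \<le> of_nat N * ?q" by (intro mult_right_mono) (auto simp: cardS)
    finally show ?thesis .
  qed
  have "emeasure cantor Cov \<le> (\<Sum>\<tau>\<in>?T. emeasure cantor (\<Union>\<rho>\<in>?S \<tau>. cyl (\<tau> @ \<rho>)))"
    unfolding Cov_def by (rule emeasure_subadditive_finite[OF finite_strs]) (use inner_sets in auto)
  also have "\<dots> \<le> (\<Sum>\<tau>\<in>?T. of_nat N * ?q)" by (rule sum_mono) (use inner in auto)
  also have "\<dots> = of_nat (2 ^ a) * (of_nat N * ?q)" by (simp add: card_strs)
  also have "\<dots> = ennreal (real (2 ^ a) * (real N * (1/2) ^ (a + l)))"
    by (simp add: ennreal_mult ennreal_of_nat_eq_real_of_nat)
  also have "real (2 ^ a) * (real N * (1/2) ^ (a + l)) = real N * (1/2) ^ l"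
    by (simp add: power_add field_simps)
  finally show "emeasure cantor Cov \<le> ennreal (real N * (1/2) ^ l)" .
qed


section \<open>Measure of the failure events\<close>

definition \<beta>Y :: "(nat \<Rightarrow> bool) \<Rightarrow> nat \<Rightarrow> nat \<Rightarrow> nat" where "\<beta>Y Y s j = ind (Y j)"

definition rhoY :: "(nat \<Rightarrow> bool) \<Rightarrow> nat \<Rightarrow> nat \<Rightarrow> nat \<Rightarrow> nat \<Rightarrow> nat" where
  "rhoY Y c k i n = rho (\<beta>Y Y) 0 c k i n"

lemma numl_sum: "numl \<rho> = (\<Sum>j<length \<rho>. 2 ^ j * ind (\<rho> ! j))"
proof (induction \<rho>)
  case Nil then show ?case by simp
next
  case (Cons b \<rho>)
  have "(\<Sum>j<length (b # \<rho>). 2 ^ j * ind ((b # \<rho>) ! j)) = ind b + (\<Sum>j<length \<rho>. 2 ^ Suc j * ind (\<rho> ! j))"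
    by (subst length_Cons, subst sum.lessThan_Suc_shift) simp
  also have "\<dots> = ind b + 2 * (\<Sum>j<length \<rho>. 2 ^ j * ind (\<rho> ! j))"
    by (simp add: sum_distrib_left mult.assoc)
  finally show ?case using Cons by (simp add: ind_def)
qed

lemma rhoY_numl: "rhoY Y c k i n = numl (map Y [startb c k (prod_encode (i, n))..<startb c k (prod_encode (i, n)) + lenb c k (prod_encode (i, n))])"
  unfolding rhoY_def rho_def numl_sum \<beta>Y_def by simp

lemma startb_Suc: "startb c k (Suc b) = startb c k b + lenb c k b"
  by (simp add: startb_def)

lemma startb_mono: "b \<le> b' \<Longrightarrow> startb c k b \<le> startb c k b'"
  unfolding startb_def by (rule sum_mono2) auto

lemma block_before: "b < b' \<Longrightarrow> startb c k b + lenb c k b \<le> startb c k b'"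
  using startb_mono[of "Suc b" b' c k] by (simp add: startb_Suc)

lemma pe_mono: "n' < n \<Longrightarrow> prod_encode (i, n') < prod_encode (i, n)"
proof -
  assume "n' < n"
  have sm: "strict_mono triangle" unfolding strict_mono_Suc_iff by simp
  have "triangle (i + n') < triangle (i + n)" by (rule strict_monoD[OF sm]) (use \<open>n' < n\<close> in simp)
  then show ?thesis by (simp add: prod_encode_def)
qed

lemma run_cong: "(\<forall>n'<n. \<rho> n' = \<rho>' n') \<Longrightarrow> run g \<rho> n = run g \<rho>' n"
  by (induction n) (auto split: option.splits)

lemma runb_cong: "(\<forall>n'<n. \<rho> n' = \<rho>' n') \<Longrightarrow> runb g \<rho> t n = runb g \<rho>' t n"
  by (induction n) (auto split: option.splits)

lemma rho_local:
  assumes "\<forall>j<startb c k (prod_encode (i, n)) + lenb c k (prod_encode (i, n)). \<beta> s j = \<beta>' s' j"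
    and "n' \<le> n"
  shows "rho \<beta> s c k i n' = rho \<beta>' s' c k i n'"
proof -
  have "startb c k (prod_encode (i, n')) + lenb c k (prod_encode (i, n')) \<le> startb c k (prod_encode (i, n)) + lenb c k (prod_encode (i, n))"
  proof (cases "n' = n")
    case False
    then have "prod_encode (i, n') < prod_encode (i, n)" using assms(2) pe_mono by simp
    then show ?thesis using block_before[of "prod_encode (i, n')" "prod_encode (i, n)" c k] by simp
  qed simp
  then show ?thesis unfolding rho_def using assms(1) by (intro sum.cong refl) auto
qed

definition ext :: "bool list \<Rightarrow> nat \<Rightarrow> bool" where "ext \<tau> j = (j < length \<tau> \<and> \<tau> ! j)"

definition Eg :: "(nat \<Rightarrow> nat \<Rightarrow> nat) \<Rightarrow> (nat \<Rightarrow> nat) \<Rightarrow> nat \<Rightarrow> bool" where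
  "Eg g \<rho> n \<longleftrightarrow> (\<exists>L x. run g \<rho> n = Some L \<and> good g L \<and> chosen g L (\<rho> n) = Some x \<and> bad g L x)"

lemma notgood_Eg: "run g \<rho> n = Some L \<Longrightarrow> \<not> good g L \<Longrightarrow> \<exists>n'<n. Eg g \<rho> n'"
proof (induction n arbitrary: L)
  case 0 then show ?case using good_Nil by simp
next
  case (Suc n)
  then obtain L0 x where L0: "run g \<rho> n = Some L0" "chosen g L0 (\<rho> n) = Some x" "L = x # L0"
    by (auto split: option.splits)
  show ?case
  proof (cases "good g L0")
    case True
    have "bad g L0 x" using chosen_Some[OF L0(2)] Suc.prems L0(3) unfolding bad_def by blast
    then have "Eg g \<rho> n" unfolding Eg_def using L0 True by blast
    then show ?thesis by blast
  next
    case False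
    then show ?thesis using Suc.IH[OF L0(1)] less_Suc_eq by blast
  qed
qed

lemma fails_Eg: "fails g \<rho> n \<Longrightarrow> \<exists>n'\<le>n. Eg g \<rho> n'"
proof -
  assume "fails g \<rho> n"
  then obtain L x where L: "run g \<rho> n = Some L" "chosen g L (\<rho> n) = Some x" "bad g L x"
    unfolding fails_def by blast
  show ?thesis
  proof (cases "good g L")
    case True then show ?thesis using L unfolding Eg_def by blast
  next
    case False then show ?thesis using notgood_Eg[OF L(1)] by (meson less_imp_le)
  qed
qed

definition Rset :: "(nat \<Rightarrow> nat \<Rightarrow> nat) \<Rightarrow> nat \<Rightarrow> nat \<Rightarrow> nat \<Rightarrow> nat \<Rightarrow> bool list \<Rightarrow> nat set" where
  "Rset g c k i n \<tau> = {r. \<exists>L x. run g (rhoY (ext \<tau>) c k i) n = Some L \<and> good g L \<and> chosen g L r = Some x \<and> bad g L x}"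

lemma Rset_card:
  assumes kb: "k_bounded k g"
  shows "finite (Rset g c k i n \<tau>) \<and> card (Rset g c k i n \<tau>) \<le> n * k"
proof (cases "\<exists>L. run g (rhoY (ext \<tau>) c k i) n = Some L \<and> good g L")
  case True
  then obtain L where L: "run g (rhoY (ext \<tau>) c k i) n = Some L" "good g L" by blast
  have sub: "Rset g c k i n \<tau> \<subseteq> cnt g L ` {x. bad g L x}"
  proof
    fix r assume "r \<in> Rset g c k i n \<tau>"
    then obtain x where "chosen g L r = Some x" "bad g L x" unfolding Rset_def using L(1) by auto
    then show "r \<in> cnt g L ` {x. bad g L x}" using chosen_Some by force
  qed
  have fb: "finite {x. bad g L x}" "card {x. bad g L x} \<le> length L * k"
    using bad_finite_card[OF kb L(2)] by auto
  have "finite (Rset g c k i n \<tau>)" using sub fb(1) finite_subset by blast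
  moreover have "card (Rset g c k i n \<tau>) \<le> card {x. bad g L x}"
    using card_mono[OF finite_imageI[OF fb(1)] sub] card_image_le[OF fb(1), of "cnt g L"] by linarith
  ultimately show ?thesis using fb(2) run_length[OF L(1)] by simp
next
  case False
  then have "Rset g c k i n \<tau> = {}" unfolding Rset_def by blast
  then show ?thesis by simp
qed

definition Cov :: "(nat \<Rightarrow> nat \<Rightarrow> nat \<Rightarrow> nat) \<Rightarrow> nat \<Rightarrow> nat \<Rightarrow> nat \<Rightarrow> (nat \<Rightarrow> bool) set" where
  "Cov G c k b = (\<Union>\<tau>\<in>{\<tau>. length \<tau> = startb c k b}. \<Union>\<rho>\<in>{\<rho>. length \<rho> = lenb c k b \<and> numl \<rho> \<in> Rset (G (pfst b)) c k (pfst b) (psnd b) \<tau>}. cyl (\<tau> @ \<rho>))"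

lemma Eg_Cov:
  assumes "Eg (G i) (rhoY Y c k i) n"
  shows "Y \<in> Cov G c k (prod_encode (i, n))"
proof -
  let ?b = "prod_encode (i, n)"
  let ?a = "startb c k ?b" and ?l = "lenb c k ?b"
  let ?\<tau> = "map Y [0..<?a]" and ?\<rho> = "map Y [?a..<?a + ?l]"
  have agree: "rhoY Y c k i n' = rhoY (ext ?\<tau>) c k i n'" if "n' < n" for n'
  proof -
    have le: "startb c k (prod_encode (i, n')) + lenb c k (prod_encode (i, n')) \<le> ?a"
      using block_before pe_mono[OF that] by blast
    show ?thesis unfolding rhoY_def rho_def \<beta>Y_def
      by (intro sum.cong refl) (use le in \<open>auto simp: ext_def\<close>)
  qed
  have run_eq: "run (G i) (rhoY Y c k i) n = run (G i) (rhoY (ext ?\<tau>) c k i) n"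
    by (rule run_cong) (use agree in blast)
  have "rhoY Y c k i n \<in> Rset (G i) c k i n ?\<tau>"
    using assms run_eq unfolding Eg_def Rset_def by auto
  moreover have "numl ?\<rho> = rhoY Y c k i n" by (simp add: rhoY_numl)
  ultimately have h2: "?\<rho> \<in> {\<rho>. length \<rho> = lenb c k ?b \<and> numl \<rho> \<in> Rset (G (pfst ?b)) c k (pfst ?b) (psnd ?b) ?\<tau>}"
    by simp
  have h1: "?\<tau> \<in> {\<tau>. length \<tau> = startb c k ?b}" by simp
  have yc: "Y \<in> cyl (?\<tau> @ ?\<rho>)" unfolding cyl_def by (auto simp: nth_append)
  show ?thesis unfolding Cov_def by (rule UN_I[OF h1], rule UN_I[OF h2], rule yc)
qed

lemma Cov_bound:
  assumes kb: "\<And>i. k_bounded k (G i)"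
  shows "Cov G c k b \<in> sets cantor" "emeasure cantor (Cov G c k b) \<le> ennreal ((1/2) ^ c * (1/2) ^ Suc b)"
proof -
  have R: "\<And>\<tau>. finite (Rset (G (pfst b)) c k (pfst b) (psnd b) \<tau>) \<and> card (Rset (G (pfst b)) c k (pfst b) (psnd b) \<tau>) \<le> psnd b * k"
    using Rset_card[OF kb] by blast
  note cb = cover_bound[where R="\<lambda>\<tau>. Rset (G (pfst b)) c k (pfst b) (psnd b) \<tau>" and N="psnd b * k" and a="startb c k b" and l="lenb c k b", OF R]
  show "Cov G c k b \<in> sets cantor" unfolding Cov_def by (rule cb(1))
  have "emeasure cantor (Cov G c k b) \<le> ennreal (real (psnd b * k) * (1/2) ^ lenb c k b)"
    unfolding Cov_def by (rule cb(2))
  also have "\<dots> \<le> ennreal ((1/2) ^ c * (1/2) ^ Suc b)"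
  proof (rule ennreal_leI)
    have nb: "psnd b \<le> b"
    proof -
      obtain u v where uv: "prod_decode b = (u, v)" by (cases "prod_decode b")
      then have "b = prod_encode (u, v)" by (metis prod_decode_inverse)
      then show ?thesis using le_prod_encode_2[of v u] by simp
    qed
    have "psnd b * k \<le> 2 ^ b * 2 ^ k"
      by (intro mult_le_mono) (use nb less_exp[of b] less_exp[of k] in linarith)+
    then have "psnd b * k \<le> 2 ^ (b + k)" by (simp add: power_add)
    then have "real (psnd b * k) \<le> real (2 ^ (b + k))" by (rule of_nat_mono)
    then have "real (psnd b * k) \<le> 2 ^ (b + k)" by simp
    then have "real (psnd b * k) * (1/2) ^ lenb c k b \<le> 2 ^ (b + k) * (1/2) ^ lenb c k b"
      by (rule mult_right_mono) simp
    also have "\<dots> = (1/2) ^ c * (1/2) ^ Suc b"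
      by (simp add: lenb_def power_add power_mult power2_eq_square field_simps)
    finally show "real (psnd b * k) * (1/2) ^ lenb c k b \<le> (1/2) ^ c * (1/2) ^ Suc b" .
  qed
  finally show "emeasure cantor (Cov G c k b) \<le> ennreal ((1/2) ^ c * (1/2) ^ Suc b)" .
qed

lemma Cov_total:
  assumes kb: "\<And>i. k_bounded k (G i)"
  shows "emeasure cantor (\<Union>b. Cov G c k b) \<le> ennreal ((1/2) ^ c)"
proof -
  have "emeasure cantor (\<Union>b. Cov G c k b) \<le> (\<Sum>b. emeasure cantor (Cov G c k b))"
    by (rule emeasure_subadditive_countably) (use Cov_bound[OF kb] in auto)
  also have "\<dots> \<le> (\<Sum>b. ennreal ((1/2) ^ c * (1/2) ^ Suc b))"
    by (rule suminf_le) (use Cov_bound[OF kb] in auto)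
  also have "\<dots> = ennreal (\<Sum>b. (1/2) ^ c * (1/2) ^ Suc b)"
    by (rule suminf_ennreal2) (use summable_ignore_initial_segment[OF summable_geometric[of "1/2::real"], of 1] in \<open>auto intro!: summable_mult simp del: power_Suc\<close>)
  also have "(\<Sum>b. (1/2::real) ^ c * (1/2) ^ Suc b) = (1/2) ^ c"
  proof -
    have one: "(\<Sum>b. (1/2::real) ^ Suc b) = 1" by (rule sums_unique[OF power_half_series, symmetric])
    have sm: "summable (\<lambda>b. (1/2::real) ^ Suc b)" by (rule sums_summable[OF power_half_series])
    show ?thesis using suminf_mult[OF sm, of "(1/2)^c"] one by simp
  qed
  finally show ?thesis .
qed


section \<open>The test and the final argument\<close>

definition Gf :: "(nat \<Rightarrow> nat \<Rightarrow> nat \<Rightarrow> nat) \<Rightarrow> nat \<Rightarrow> nat \<Rightarrow> nat \<Rightarrow> nat" where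
  "Gf f i a y = f i a (max y (Suc a))"

definition \<beta>s :: "nat \<Rightarrow> nat \<Rightarrow> nat" where "\<beta>s s j = ind (j < llen s \<and> lnth s j = 1)"

lemma llen_str: "llen (str_code \<sigma>) = length \<sigma>"
  by (simp add: str_code_def llen_correct)

lemma lnth_str: "j < length \<sigma> \<Longrightarrow> lnth (str_code \<sigma>) j = (if \<sigma> ! j then 1 else 0)"
  by (simp add: str_code_def lnth_correct)

lemma \<beta>s_str: "\<beta>s (str_code \<sigma>) j = ind (j < length \<sigma> \<and> \<sigma> ! j)"
  by (cases "j < length \<sigma>") (auto simp: \<beta>s_def llen_str lnth_str)

lemma rc_\<beta>s: "rc A 2 (\<lambda>xs. \<beta>s (xs!0) (xs!1))"
  unfolding \<beta>s_def by (intro rc_intros3; simp)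

lemma rc_Gf: "computable_coloring_seq f \<Longrightarrow> rc A 3 (\<lambda>xs. Gf f (xs!0) (xs!1) (xs!2))"
  unfolding Gf_def by (rule rc_coloring)

lemma Gf_eq: "a < y \<Longrightarrow> Gf f i a y = f i a y"
  by (simp add: Gf_def max_absorb1 Suc_leI)

lemma kb_Gf: "k_bounded k (f i) \<Longrightarrow> k_bounded k (Gf f i)"
proof -
  have "{(x, y). x < y \<and> Gf f i x y = c} = {(x, y). x < y \<and> f i x y = c}" for c by (auto simp: Gf_eq)
  then show "k_bounded k (f i) \<Longrightarrow> k_bounded k (Gf f i)" unfolding k_bounded_def by simp
qed

lemma rainbow_Gf: "rainbow (Gf f i) S \<Longrightarrow> rainbow (f i) S"
  unfolding rainbow_def by (metis Gf_eq)

definition Tpred :: "nat \<Rightarrow> (nat \<Rightarrow> nat \<Rightarrow> nat \<Rightarrow> nat) \<Rightarrow> nat \<Rightarrow> nat \<Rightarrow> nat \<Rightarrow> nat \<Rightarrow> bool" where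
  "Tpred EH f k c s w \<longleftrightarrow>
     startb c k (pfst w) + lenb c k (pfst w) \<le> llen s \<and>
     runc (Gf f) \<beta>s k (psnd (pfst w)) c (pfst (pfst w)) (pfst (psnd w)) s \<noteq> 0 \<and>
     choosec (Gf f) (pfst (pfst w)) (runc (Gf f) \<beta>s k (psnd (pfst w)) c (pfst (pfst w)) (pfst (psnd w)) s - 1)
        (rho \<beta>s s c k (pfst (pfst w)) (psnd (pfst w))) (pfst (psnd w)) < pfst (psnd w) \<and>
     \<not> halting (qcode EH (prod_encode (pfst (pfst w), prod_encode (Suc (prod_encode (
        choosec (Gf f) (pfst (pfst w)) (runc (Gf f) \<beta>s k (psnd (pfst w)) c (pfst (pfst w)) (pfst (psnd w)) s - 1)
          (rho \<beta>s s c k (pfst (pfst w)) (psnd (pfst w))) (pfst (psnd w)),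
        runc (Gf f) \<beta>s k (psnd (pfst w)) c (pfst (pfst w)) (pfst (psnd w)) s - 1)), psnd (psnd w)))))"

lemma rc_Tpred:
  assumes "computable_coloring_seq f"
  shows "rcp halting 3 (\<lambda>xs. \<not> Tpred EH f k (xs!1) (xs!2) (xs!0))"
proof -
  note rcG = rc_Gf[OF assms, of halting]
  note rcB = rc_\<beta>s[of halting]
  show ?thesis unfolding Tpred_def qcode_def lenb_def startb_def
    by (intro rc_intros3 rc_runc[OF rcG rcB] rc_choosec[OF rcG] rc_rho[OF rcG rcB]; simp)
qed


lemma pe_decode: "prod_encode (pfst b, psnd b) = b"
  by (simp add: pfst_def psnd_def)

context
  fixes f :: "nat \<Rightarrow> nat \<Rightarrow> nat \<Rightarrow> nat" and k EH :: nat
  assumes EH: "\<forall>P. halting (qcode EH P) \<longleftrightarrow> (\<exists>y. qprop (Gf f) P y)"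
begin

lemma halt_L: "halting (qcode EH (prod_encode (i, prod_encode (Suc (prod_encode (x, list_encode L)), m))))
   \<longleftrightarrow> (\<exists>y. m < y \<and> okc (Gf f i) (x # L) y)"
proof -
  have "Suc (prod_encode (x, list_encode L)) = list_encode (x # L)" by simp
  then show ?thesis using EH unfolding qprop_def by (simp only: pfst_pe psnd_pe okcc_eq)
qed

lemma S2:
  assumes Y: "Y \<in> cyl \<sigma>" and T: "Tpred EH f k c (str_code \<sigma>) w"
  shows "\<exists>i n. fails (Gf f i) (rhoY Y c k i) n"
proof -
  define b where "b = pfst w"
  define t where "t = pfst (psnd w)"
  define m where "m = psnd (psnd w)"
  define i where "i = pfst b"
  define n where "n = psnd b"
  define s where "s = str_code \<sigma>"
  have bin: "prod_encode (i, n) = b" unfolding i_def n_def by (rule pe_decode)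
  let ?z = "runc (Gf f) \<beta>s k n c i t s"
  let ?r = "rho \<beta>s s c k i n"
  have ls: "llen s = length \<sigma>" by (simp add: s_def llen_str)
  have T': "startb c k b + lenb c k b \<le> length \<sigma>" "?z \<noteq> 0" "choosec (Gf f) i (?z - 1) ?r t < t"
     "\<not> halting (qcode EH (prod_encode (i, prod_encode (Suc (prod_encode (choosec (Gf f) i (?z - 1) ?r t, ?z - 1)), m))))"
    using T unfolding Tpred_def b_def[symmetric] t_def[symmetric] m_def[symmetric] i_def[symmetric]
      n_def[symmetric] s_def[symmetric] ls by auto
  have agree: "\<forall>j<startb c k (prod_encode (i, n)) + lenb c k (prod_encode (i, n)). \<beta>s s j = \<beta>Y Y 0 j"
    using T'(1) Y unfolding bin s_def \<beta>s_str \<beta>Y_def cyl_def by auto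
  have rho_eq: "rho \<beta>s s c k i n' = rhoY Y c k i n'" if "n' \<le> n" for n'
    unfolding rhoY_def by (rule rho_local[where \<beta>=\<beta>s and s=s and \<beta>'="\<beta>Y Y" and s'=0, OF agree that])
  have runb_eq: "runb (Gf f i) (rho \<beta>s s c k i) t n = runb (Gf f i) (rhoY Y c k i) t n"
    by (rule runb_cong) (use rho_eq in auto)
  obtain L where L: "runb (Gf f i) (rhoY Y c k i) t n = Some L" "?z = Suc (list_encode L)"
    using T'(2) unfolding runc_eq runb_eq ocode_def by (auto split: option.splits)
  define x where "x = choosec (Gf f) i (list_encode L) ?r t"
  have "chosenb (Gf f i) L ?r t = Some x" using T'(3) unfolding choosec_eq x_def L(2) by simp
  then have ch: "chosen (Gf f i) L (rhoY Y c k i n) = Some x"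
    using rho_eq[of n] chosenb_Some_iff chosen_Some_iff by auto
  have "\<not> (\<exists>y. m < y \<and> okc (Gf f i) (x # L) y)"
    using T'(4) halt_L unfolding L(2) x_def by simp
  then have "{y. okc (Gf f i) (x # L) y} \<subseteq> {..m}" using not_less by blast
  then have "\<not> good (Gf f i) (x # L)" unfolding good_def using finite_subset by blast
  then have "bad (Gf f i) L x" unfolding bad_def using chosen_Some[OF ch] by blast
  moreover have "run (Gf f i) (rhoY Y c k i) n = Some L" by (rule runb_run[OF L(1)])
  ultimately show ?thesis unfolding fails_def using ch by blast
qed

lemma S3:
  assumes F: "fails (Gf f i) (rhoY Y c k i) n"
  shows "\<exists>\<sigma> w. Y \<in> cyl \<sigma> \<and> Tpred EH f k c (str_code \<sigma>) w"
proof -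
  obtain L x where L: "run (Gf f i) (rhoY Y c k i) n = Some L" "chosen (Gf f i) L (rhoY Y c k i n) = Some x"
    "bad (Gf f i) L x" using F unfolding fails_def by blast
  have "finite {y. okc (Gf f i) (x # L) y}" using L(3) unfolding bad_def good_def by blast
  then obtain m where m: "\<forall>y. okc (Gf f i) (x # L) y \<longrightarrow> y \<le> m"
    using finite_nat_set_iff_bounded_le by auto
  define t where "t = Suc (Max (set (x # L)))"
  have tgt: "\<forall>a\<in>set (x # L). a < t" unfolding t_def by (simp add: le_imp_less_Suc)
  define b where "b = prod_encode (i, n)"
  define \<sigma> where "\<sigma> = map Y [0..<startb c k b + lenb c k b]"
  define s where "s = str_code \<sigma>"
  define w where "w = prod_encode (b, prod_encode (t, m))"
  have Y: "Y \<in> cyl \<sigma>" unfolding \<sigma>_def cyl_def by simp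
  have agree: "\<forall>j<startb c k (prod_encode (i, n)) + lenb c k (prod_encode (i, n)). \<beta>s s j = \<beta>Y Y 0 j"
    unfolding s_def \<beta>s_str \<beta>Y_def \<sigma>_def b_def by simp
  have rho_eq: "rho \<beta>s s c k i n' = rhoY Y c k i n'" if "n' \<le> n" for n'
    unfolding rhoY_def by (rule rho_local[where \<beta>=\<beta>s and s=s and \<beta>'="\<beta>Y Y" and s'=0, OF agree that])
  have runb_eq: "runb (Gf f i) (rho \<beta>s s c k i) t n = runb (Gf f i) (rhoY Y c k i) t n"
    by (rule runb_cong) (use rho_eq in auto)
  have rb: "runb (Gf f i) (rhoY Y c k i) t n = Some L" by (rule run_runb[OF L(1)]) (use tgt in auto)
  have z: "runc (Gf f) \<beta>s k n c i t s = Suc (list_encode L)"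
    unfolding runc_eq runb_eq rb ocode_def by simp
  have "chosenb (Gf f i) L (rhoY Y c k i n) t = Some x"
    using L(2) tgt chosenb_Some_iff chosen_Some_iff by auto
  then have x: "choosec (Gf f) i (list_encode L) (rho \<beta>s s c k i n) t = x \<and> x < t"
    unfolding choosec_eq rho_eq[OF le_refl] by (auto split: if_splits)
  have nh: "\<not> (\<exists>y. m < y \<and> okc (Gf f i) (x # L) y)" using m by (auto simp: not_less[symmetric])
  have ls: "llen s = startb c k (prod_encode (i, n)) + lenb c k (prod_encode (i, n))"
    by (simp add: s_def llen_str \<sigma>_def b_def)
  have hl: "\<not> halting (qcode EH (prod_encode (i, prod_encode (Suc (prod_encode (x, list_encode L)), m))))"
    using nh halt_L by blast
  have "Tpred EH f k c s w"
    unfolding Tpred_def w_def b_def using x z hl ls by simp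
  then show ?thesis using Y s_def by blast
qed

end


lemma rcp_program:
  assumes "rcp A 3 P"
  obtains q where "\<forall>xs. length xs = 3 \<longrightarrow> evalr A q xs (ind (P xs))"
  using assms unfolding rcp_def rc_def by blast

lemma ce_from_T:
  assumes "rcp A 3 (\<lambda>xs. \<not> T (xs!1) (xs!2) (xs!0))"
  shows "ce_rel_strings A (\<lambda>c \<sigma>. \<exists>w. T c (str_code \<sigma>) w)"
proof -
  obtain q where q: "\<forall>xs. length xs = 3 \<longrightarrow> evalr A q xs (ind (\<not> T (xs!1) (xs!2) (xs!0)))"
    using rcp_program[OF assms] by blast
  have q': "\<forall>xs'. length xs' = Suc 2 \<longrightarrow> evalr A q xs' (ind (\<not> T (xs'!1) (xs'!2) (xs'!0)))" using q by simp
  show ?thesis unfolding ce_rel_strings_def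
  proof (intro exI[of _ "Mn q"] allI)
    fix c \<sigma>
    show "(\<exists>w. T c (str_code \<sigma>) w) \<longleftrightarrow> (\<exists>v. evalr A (Mn q) [c, str_code \<sigma>] v)"
    proof
      assume "\<exists>w. T c (str_code \<sigma>) w"
      then obtain w where "T c (str_code \<sigma>) w" by blast
      then have "ind (\<not> T ((w # [c, str_code \<sigma>])!1) ((w # [c, str_code \<sigma>])!2) ((w # [c, str_code \<sigma>])!0)) = 0"
        by (simp add: ind_def)
      from evalr_Mn[OF q' _ this] show "\<exists>v. evalr A (Mn q) [c, str_code \<sigma>] v" by auto
    next
      assume "\<exists>v. evalr A (Mn q) [c, str_code \<sigma>] v"
      then obtain v where "evalr A (Mn q) [c, str_code \<sigma>] v" by blast
      from evalr_Mn_inv[OF q' _ this] show "\<exists>w. T c (str_code \<sigma>) w" by (auto simp: ind_def split: if_splits)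
    qed
  qed
qed

theorem theorem6p4:
  fixes k :: nat and X :: "nat set" and f :: "nat \<Rightarrow> nat \<Rightarrow> nat \<Rightarrow> nat"
  assumes "k \<ge> 1"
    and "two_random X"
    and "computable_coloring_seq f"
    and "\<forall>i. k_bounded k (f i)"
  shows "\<exists>S :: nat \<Rightarrow> nat set. computable_set_seq_in X S \<and>
           (\<forall>i. infinite (S i) \<and> rainbow (f i) (S i))"
proof -
  note cc = assms(3)
  have kb: "\<And>i. k_bounded k (Gf f i)" using assms(4) kb_Gf by blast
  obtain EH where EH: "\<forall>P. halting (qcode EH P) \<longleftrightarrow> (\<exists>y. qprop (Gf f) P y)"
    using halting_query[OF rc_Gf[OF cc]] by blast
  define W where "W = (\<lambda>c \<sigma>. \<exists>w. Tpred EH f k c (str_code \<sigma>) w)"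
  have ce: "ce_rel_strings halting W" unfolding W_def by (rule ce_from_T[OF rc_Tpred[OF cc]])
  have meas: "emeasure cantor (open_class (W c)) \<le> ennreal ((1/2) ^ c)" for c
  proof -
    have sub: "open_class (W c) \<subseteq> (\<Union>b. Cov (Gf f) c k b)"
    proof
      fix Y assume "Y \<in> open_class (W c)"
      then obtain \<sigma> w where "Y \<in> cyl \<sigma>" "Tpred EH f k c (str_code \<sigma>) w"
        unfolding open_class_def W_def by blast
      then obtain i n where "fails (Gf f i) (rhoY Y c k i) n" using S2[OF EH] by blast
      then obtain n' where "Eg (Gf f i) (rhoY Y c k i) n'" using fails_Eg by blast
      then have "Y \<in> Cov (Gf f) c k (prod_encode (i, n'))" by (rule Eg_Cov)
      then show "Y \<in> (\<Union>b. Cov (Gf f) c k b)" by blast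
    qed
    have "(\<Union>b. Cov (Gf f) c k b) \<in> sets cantor"
      by (intro sets.countable_UN) (use Cov_bound[OF kb] in auto)
    then have "emeasure cantor (open_class (W c)) \<le> emeasure cantor (\<Union>b. Cov (Gf f) c k b)"
      by (rule emeasure_mono[OF sub])
    also have "\<dots> \<le> ennreal ((1/2) ^ c)" by (rule Cov_total[OF kb])
    finally show ?thesis .
  qed
  have "mltest halting W" unfolding mltest_def using ce meas by blast
  then obtain c where c: "(\<lambda>i. i \<in> X) \<notin> open_class (W c)"
    using assms(2) unfolding two_random_def mlrandom_rel_def by blast
  define X' where "X' = (\<lambda>i. i \<in> X)"
  have nf: "\<forall>n. \<not> fails (Gf f i) (rhoY X' c k i) n" for i
  proof (intro allI notI)
    fix n assume "fails (Gf f i) (rhoY X' c k i) n"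
    then obtain \<sigma> w where "X' \<in> cyl \<sigma>" "Tpred EH f k c (str_code \<sigma>) w" using S3[OF EH] by blast
    then have "X' \<in> open_class (W c)" unfolding open_class_def W_def by blast
    then show False using c unfolding X'_def by blast
  qed
  define S where "S = (\<lambda>i. Sset (Gf f i) (rhoY X' c k i))"
  have good: "infinite (S i) \<and> rainbow (f i) (S i)" for i
    using Sset_good[OF nf[of i]] rainbow_Gf unfolding S_def by blast
  have comp: "computable_set_seq_in X S"
  proof -
    let ?A = "\<lambda>m. m \<in> X"
    have rcG: "rc ?A 3 (\<lambda>xs. Gf f (xs!0) (xs!1) (xs!2))" by (rule rc_Gf[OF cc])
    have rcB: "rc ?A 2 (\<lambda>xs. \<beta>Y X' (xs!0) (xs!1))"
    proof -
      have "rcp ?A 2 (\<lambda>xs. ?A (xs!1))" by (rule rcp_orc, rule rc_proj) simp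
      then show ?thesis unfolding \<beta>Y_def X'_def rcp_def by simp
    qed
    define F1 where "F1 = (\<lambda>xs. ind (runc (Gf f) (\<beta>Y X') k (Suc (xs!2)) c (xs!1) (xs!0) 0 = 0))"
    define F2 where "F2 = (\<lambda>xs. ind (\<exists>j < llen (runc (Gf f) (\<beta>Y X') k (Suc (xs!1)) c (xs!0) (xs!2) 0 - 1).
        lnth (runc (Gf f) (\<beta>Y X') k (Suc (xs!1)) c (xs!0) (xs!2) 0 - 1) j = xs!1))"
    have "rc ?A 3 F1" unfolding F1_def by (intro rc_intros3 rc_runc[OF rcG rcB]; simp)
    then obtain q1 where q1: "\<forall>xs. length xs = 3 \<longrightarrow> evalr ?A q1 xs (F1 xs)" unfolding rc_def by blast
    have q1': "\<forall>xs. length xs = Suc 2 \<longrightarrow> evalr ?A q1 xs (F1 xs)" using q1 by simp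
    have "rc ?A 3 F2" unfolding F2_def by (intro rc_intros3 rc_runc[OF rcG rcB]; simp)
    then obtain q2 where q2: "\<forall>xs. length xs = 3 \<longrightarrow> evalr ?A q2 xs (F2 xs)" unfolding rc_def by blast
    have rr: "rho (\<beta>Y X') 0 c k i = rhoY X' c k i" for i by (rule ext) (simp add: rhoY_def)
    show ?thesis unfolding computable_set_seq_in_def
    proof (intro exI[of _ "Comp q2 [Proj 0, Proj 1, Mn q1]"] allI)
      fix i a
      obtain L where L: "run (Gf f i) (rhoY X' c k i) (Suc a) = Some L"
        using run_invariant[OF nf[of i]] by blast
      define t0 where "t0 = Suc (Max (insert 0 (set L)))"
      have "runb (Gf f i) (rhoY X' c k i) t0 (Suc a) = Some L"
        by (rule run_runb[OF L]) (auto simp: t0_def le_imp_less_Suc)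
      then have "F1 (t0 # [i, a]) = 0" unfolding F1_def by (simp add: runc_eq rr ocode_def ind_def)
      then have ev1: "evalr ?A (Mn q1) [i, a] (LEAST t. F1 (t # [i, a]) = 0)"
        by (intro evalr_Mn[OF q1']) simp_all
      define ts where "ts = (LEAST t. F1 (t # [i, a]) = 0)"
      have "F1 (ts # [i, a]) = 0" unfolding ts_def by (rule LeastI) fact
      then obtain L' where L': "runb (Gf f i) (rhoY X' c k i) ts (Suc a) = Some L'"
        unfolding F1_def by (auto simp: runc_eq rr ocode_def ind_def split: option.splits if_splits)
      have "L' = L" using runb_run[OF L'] L by simp
      then have rc_ts: "runc (Gf f) (\<beta>Y X') k (Suc a) c i ts 0 = Suc (list_encode L)"
        using L' by (simp add: runc_eq rr ocode_def)
      have ex: "(\<exists>j<length L. lnth (list_encode L) j = a) = (\<exists>j<length L. L ! j = a)"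
        using lnth_correct[of _ "list_encode L"] by auto
      have "F2 [i, a, ts] = ind (\<exists>j<length L. L ! j = a)"
        unfolding F2_def using rc_ts ex by (simp add: llen_correct del: runc.simps)
      also have "\<dots> = ind (a \<in> S i)"
        using Sset_mem[OF nf[of i] L] unfolding S_def by (simp add: in_set_conv_nth)
      finally have F2v: "F2 [i, a, ts] = ind (a \<in> S i)" .
      have la: "list_all2 (\<lambda>g. evalr ?A g [i, a]) [Proj 0, Proj 1, Mn q1] [i, a, ts]"
        using evalr.ev_Proj[of ?A 0 "[i, a]"] evalr.ev_Proj[of ?A 1 "[i, a]"] ev1 ts_def by simp
      have "evalr ?A q2 [i, a, ts] (F2 [i, a, ts])" using q2 by simp
      then show "evalr ?A (Comp q2 [Proj 0, Proj 1, Mn q1]) [i, a] (if a \<in> S i then 1 else 0)"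
        using evalr.ev_Comp[OF la] F2v by (simp add: ind_def)
    qed
  qed
  show ?thesis using good comp by blast
qed


end
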